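(* Let $L=\bigsqcup_{n\ge0}L_n$, $p^\downarrow$, a coherent system $\{M_n\}$ with $M_n(\lambda)>0$ for all $\lambda\in L_n$, and the Markov operators $T_n$ on $C(L_n)$ be as described in the context. Let $\bar L$ be a topological space and $\iota_n:L_n\to\bar L$ injective maps, and assume: (A1) $\bar L$ is compact, metrizable and separable; (A2) every nonempty open subset of $\bar L$ meets $\iota_n(L_n)$ for all sufficiently large $n$; (A3) there is a dense linear subspace $\mathcal F\subset C(\bar L)$ and an ascending sequence $\mathcal F^1\subset\mathcal F^2\subset\cdots$ of finite-dimensional subspaces with $\bigcup_m\mathcal F^m=\mathcal F$ such that for each $m$, for all sufficiently large $n$, $\pi_n$ is injective on $\mathcal F^m$ and $T_n(\pi_n(\mathcal F^m))\subseteq\pi_n(\mathcal F^m)$; (A4) there are numbers $\varepsilon_n>0$ with $\varepsilon_n\to0$ such that for every $m$ and every $f\in\mathcal F^m$, the (for large $n$ uniquely defined) elements $g_n\in\mathcal F^m$ with $\pi_n(g_n)=\varepsilon_n^{-1}(T_n-\mathbf 1)\pi_n(f)$ converge in the finite-dimensional space $\mathcal F^m$ to a limit, denoted $Af$ (this defines a linear operator $A:\mathcal F\to\mathcal F$ preserving each $\mathcal F^m$); (A5) the constant function $1$ belongs to $\mathcal F$. Then: (1) the operator $A:\mathcal F\to\mathcal F$ is closable in the Banach space $C(\bar L)$; (2) its closure $\bar A$ generates a conservative Markov semigroup $\{T(t)\}_{t\ge0}$ in $C(\bar L)$; (3) for every $f\in C(\bar L)$ and $t\ge0$, $\|T_n^{[\varepsilon_n^{-1}t]}\pi_n(f)-\pi_n(T(t)f)\|_n\to0$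 as $n\to\infty$, uniformly in $t$ on bounded intervals.
   Context: Setting: $L=\bigsqcup_{n\ge0}L_n$ is a graded set with $L_0$ a singleton and each $L_n$ finite; $p^\downarrow:L\times L\to[0,\infty)$ vanishes unless $|\lambda|=|\mu|+1$ and satisfies $\sum_{\mu\in L_{|\lambda|-1}}p^\downarrow(\lambda,\mu)=1$ for $|\lambda|\ge1$. A coherent system is a sequence of probability measures $M_n$ on $L_n$ with $\sum_{\lambda\in L_n}M_n(\lambda)p^\downarrow(\lambda,\mu)=M_{n-1}(\mu)$. With $M_n>0$ everywhere, $p^\uparrow(\lambda,\nu)=\frac{M_{n+1}(\nu)}{M_n(\lambda)}p^\downarrow(\nu,\lambda)$ for $\lambda\in L_n,\nu\in L_{n+1}$, and $T_n$ acts on real functions $g$ on $L_n$ by $(T_ng)(\lambda)=\sum_{\nu\in L_{n+1}}p^\uparrow(\lambda,\nu)\sum_{\tilde\lambda\in L_n}p^\downarrow(\nu,\tilde\lambda)g(\tilde\lambda)$. $C(\bar L)$ is the Banach space of real continuous functions with norm $\|f\|=\sup|f|$; $C(L_n)$ is the space of real functions on $L_n$ with norm $\|g\|_n=\sup_{L_n}|g|$; $\pi_n:C(\bar L)\to C(L_n)$, $(\pi_nf)(\lambda)=f(\iota_n(\lambda))$. $\mathbf 1$ is the identity operator. A conservative Markov semigroup in $C(\bar L)$ is a strongly continuous semigroup of contractions that preserves the cone of nonnegative functions and fixes the constant function $1$. *)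

theory Defs
  imports "HOL-Analysis.Analysis"
begin

text \<open>The graded set L is modelled as a type 'l with a level function lev;
  L_n = level_set lev n.  Functions on L_n are functions 'l => real that vanish
  outside L_n.\<close>

definition level_set :: "('l \<Rightarrow> nat) \<Rightarrow> nat \<Rightarrow> 'l set" where
  "level_set lev n = {x. lev x = n}"

definition graded_down_kernel :: "('l \<Rightarrow> nat) \<Rightarrow> ('l \<Rightarrow> 'l \<Rightarrow> real) \<Rightarrow> bool" where
  "graded_down_kernel lev pd \<longleftrightarrow>
     (\<exists>x0. level_set lev 0 = {x0}) \<and>
     (\<forall>n. finite (level_set lev n)) \<and>
     (\<forall>la mu. pd la mu \<ge> 0) \<and>
     (\<forall>la mu. lev la \<noteq> lev mu + 1 \<longrightarrow> pd la mu = 0) \<and>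
     (\<forall>la. lev la \<ge> 1 \<longrightarrow> (\<Sum>mu\<in>level_set lev (lev la - 1). pd la mu) = 1)"

definition coherent_system :: "('l \<Rightarrow> nat) \<Rightarrow> ('l \<Rightarrow> 'l \<Rightarrow> real) \<Rightarrow> ('l \<Rightarrow> real) \<Rightarrow> bool" where
  "coherent_system lev pd M \<longleftrightarrow>
     (\<forall>la. M la \<ge> 0) \<and>
     (\<forall>n. (\<Sum>la\<in>level_set lev n. M la) = 1) \<and>
     (\<forall>n. \<forall>mu\<in>level_set lev n.
        (\<Sum>la\<in>level_set lev (Suc n). M la * pd la mu) = M mu)"

definition p_up :: "('l \<Rightarrow> 'l \<Rightarrow> real) \<Rightarrow> ('l \<Rightarrow> real) \<Rightarrow> 'l \<Rightarrow> 'l \<Rightarrow> real" where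
  "p_up pd M la nu = M nu / M la * pd nu la"

definition T_op :: "('l \<Rightarrow> nat) \<Rightarrow> ('l \<Rightarrow> 'l \<Rightarrow> real) \<Rightarrow> ('l \<Rightarrow> real) \<Rightarrow> nat
                     \<Rightarrow> ('l \<Rightarrow> real) \<Rightarrow> ('l \<Rightarrow> real)" where
  "T_op lev pd M n g = (\<lambda>la. if lev la = n then
      (\<Sum>nu\<in>level_set lev (Suc n). p_up pd M la nu *
          (\<Sum>la'\<in>level_set lev n. pd nu la' * g la'))
      else 0)"

definition proj :: "('l \<Rightarrow> nat) \<Rightarrow> (nat \<Rightarrow> 'l \<Rightarrow> 'b) \<Rightarrow> nat
                     \<Rightarrow> ('b::topological_space \<Rightarrow>\<^sub>C real) \<Rightarrow> ('l \<Rightarrow> real)" where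
  "proj lev \<iota> n f = (\<lambda>la. if lev la = n then apply_bcontfun f (\<iota> n la) else 0)"

definition conservative_markov_semigroup ::
  "(real \<Rightarrow> ('b::topological_space \<Rightarrow>\<^sub>C real) \<Rightarrow> ('b \<Rightarrow>\<^sub>C real)) \<Rightarrow> bool" where
  "conservative_markov_semigroup S \<longleftrightarrow>
     (\<forall>t\<ge>0. bounded_linear (S t)) \<and>
     (\<forall>f. S 0 f = f) \<and>
     (\<forall>s\<ge>0. \<forall>t\<ge>0. \<forall>f. S (s + t) f = S s (S t f)) \<and>
     (\<forall>f. continuous_on {0..} (\<lambda>t. S t f)) \<and>
     (\<forall>t\<ge>0. \<forall>f. norm (S t f) \<le> norm f) \<and>
     (\<forall>t\<ge>0. \<forall>f. (\<forall>x. apply_bcontfun f x \<ge> 0) \<longrightarrow> (\<forall>x. apply_bcontfun (S t f) x \<ge> 0)) \<and>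
     (\<forall>t\<ge>0. S t (const_bcontfun 1) = const_bcontfun 1)"

definition generator_graph ::
  "(real \<Rightarrow> 'v::real_normed_vector \<Rightarrow> 'v) \<Rightarrow> ('v \<times> 'v) set" where
  "generator_graph S = {(f, g). ((\<lambda>h. (1 / h) *\<^sub>R (S h f - f)) \<longlongrightarrow> g) (at_right 0)}"

definition closable :: "'v::real_normed_vector set \<Rightarrow> ('v \<Rightarrow> 'v) \<Rightarrow> bool" where
  "closable D A \<longleftrightarrow> (\<forall>f g1 g2. (f, g1) \<in> closure {(x, A x) | x. x \<in> D} \<longrightarrow>
                          (f, g2) \<in> closure {(x, A x) | x. x \<in> D} \<longrightarrow> g1 = g2)"

end

theory Submission
  imports Defs
begin

instance bcontfun :: (topological_space, complete_space) complete_space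
proof
  fix f :: "nat \<Rightarrow> ('a, 'b) bcontfun"
  assume "Cauchy f"
  then obtain g where "uniform_limit UNIV f g sequentially"
    using uniformly_convergent_eq_cauchy[of "\<lambda>_. True" f]
    unfolding Cauchy_def uniform_limit_sequentially_iff
    by (metis dist_fun_lt_imp_dist_val_lt)
  from uniform_limit_bcontfunE[OF this sequentially_bot]
  obtain l' where "g = apply_bcontfun l'" "(f \<longlonglongrightarrow> l')" by metis
  then show "convergent f"
    by (intro convergentI)
qed

instance bcontfun :: (topological_space, banach) banach ..

typedef (overloaded) 'b bop = "UNIV :: (('b::topological_space \<Rightarrow>\<^sub>C real) \<Rightarrow>\<^sub>L ('b \<Rightarrow>\<^sub>C real)) set"
  morphisms bl Bop by auto

setup_lifting type_definition_bop

instantiation bop :: (topological_space) real_vector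
begin
lift_definition zero_bop :: "'a bop" is 0 .
lift_definition plus_bop :: "'a bop \<Rightarrow> 'a bop \<Rightarrow> 'a bop" is "(+)" .
lift_definition minus_bop :: "'a bop \<Rightarrow> 'a bop \<Rightarrow> 'a bop" is "(-)" .
lift_definition uminus_bop :: "'a bop \<Rightarrow> 'a bop" is "uminus" .
lift_definition scaleR_bop :: "real \<Rightarrow> 'a bop \<Rightarrow> 'a bop" is "scaleR" .
instance
proof
  fix a b :: real and x y z :: "'a bop"
  show "x + y + z = x + (y + z)" by transfer simp
  show "x + y = y + x" by transfer simp
  show "0 + x = x" by transfer simp
  show "- x + x = 0" by transfer simp
  show "x - y = x + - y" by transfer simp
  show "a *\<^sub>R (x + y) = a *\<^sub>R x + a *\<^sub>R y" by transfer (simp add: scaleR_add_right)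
  show "(a + b) *\<^sub>R x = a *\<^sub>R x + b *\<^sub>R x" by transfer (simp add: scaleR_add_left)
  show "a *\<^sub>R b *\<^sub>R x = (a * b) *\<^sub>R x" by transfer simp
  show "1 *\<^sub>R x = x" by transfer simp
qed
end

instantiation bop :: (topological_space) real_normed_vector
begin
lift_definition norm_bop :: "'a bop \<Rightarrow> real" is norm .
definition dist_bop :: "'a bop \<Rightarrow> 'a bop \<Rightarrow> real" where "dist_bop x y = norm (x - y)"
definition sgn_bop :: "'a bop \<Rightarrow> 'a bop" where "sgn_bop x = x /\<^sub>R norm x"
definition uniformity_bop :: "('a bop \<times> 'a bop) filter"
  where "uniformity_bop = (INF e\<in>{0 <..}. principal {(x, y). dist x y < e})"
definition open_bop :: "('a bop) set \<Rightarrow> bool"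
  where "open_bop S = (\<forall>x\<in>S. \<forall>\<^sub>F (x', y) in uniformity. x' = x \<longrightarrow> y \<in> S)"
instance
proof
  fix a b :: real and x y z :: "'a bop"
  show "dist x y = norm (x - y)" by (simp add: dist_bop_def)
  show "sgn x = x /\<^sub>R norm x" by (simp add: sgn_bop_def)
  show "uniformity = (INF e\<in>{0<..}. principal {(x, y::'a bop). dist x y < e})"
    by (simp add: uniformity_bop_def)
  show "open U = (\<forall>x\<in>U. \<forall>\<^sub>F (x', y) in uniformity. x' = x \<longrightarrow> y \<in> U)" for U :: "'a bop set"
    by (simp add: open_bop_def)
  show "(norm x = 0) = (x = 0)" by transfer simp
  show "norm (x + y) \<le> norm x + norm y" by transfer (rule norm_triangle_ineq)
  show "norm (a *\<^sub>R x) = \<bar>a\<bar> * norm x" by transfer simp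
qed
end

lemma one_ne_zero_aux: "(const_bcontfun 1 :: 'a::topological_space \<Rightarrow>\<^sub>C real) \<noteq> 0"
proof
  assume "(const_bcontfun 1 :: 'a \<Rightarrow>\<^sub>C real) = 0"
  then have "apply_bcontfun (const_bcontfun 1 :: 'a \<Rightarrow>\<^sub>C real) undefined = apply_bcontfun 0 undefined"
    by simp
  then show False by simp
qed

instantiation bop :: (topological_space) real_normed_algebra_1
begin
lift_definition one_bop :: "'a bop" is id_blinfun .
lift_definition times_bop :: "'a bop \<Rightarrow> 'a bop \<Rightarrow> 'a bop" is "(o\<^sub>L)" .
instance
proof
  fix a b :: real and x y z :: "'a bop"
  show "x * y * z = x * (y * z)" by transfer (rule blinfun_eqI, simp)
  show "(x + y) * z = x * z + y * z" by transfer (rule blinfun_eqI, simp add: blinfun.add_left)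
  show "x * (y + z) = x * y + x * z" by transfer (rule blinfun_eqI, simp add: blinfun.add_right blinfun.add_left)
  show "a *\<^sub>R x * y = a *\<^sub>R (x * y)" by transfer (rule blinfun_eqI, simp add: blinfun.scaleR_left)
  show "x * a *\<^sub>R y = a *\<^sub>R (x * y)" by transfer (rule blinfun_eqI, simp add: blinfun.scaleR_right blinfun.scaleR_left)
  show "1 * x = x" by transfer (rule blinfun_eqI, simp)
  show "x * 1 = x" by transfer (rule blinfun_eqI, simp)
  show "(0::'a bop) \<noteq> 1"
  proof transfer
    show "(0::('a \<Rightarrow>\<^sub>C real) \<Rightarrow>\<^sub>L ('a \<Rightarrow>\<^sub>C real)) \<noteq> id_blinfun"
    proof
      assume "(0::('a \<Rightarrow>\<^sub>C real) \<Rightarrow>\<^sub>L ('a \<Rightarrow>\<^sub>C real)) = id_blinfun"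
      then have "blinfun_apply (0::('a \<Rightarrow>\<^sub>C real) \<Rightarrow>\<^sub>L ('a \<Rightarrow>\<^sub>C real)) (const_bcontfun 1)
         = blinfun_apply id_blinfun (const_bcontfun 1)" by simp
      then have "(const_bcontfun 1 :: 'a \<Rightarrow>\<^sub>C real) = 0" by simp
      with one_ne_zero_aux[where 'a='a] show False by blast
    qed
  qed
  show "norm (x * y) \<le> norm x * norm y" by transfer (rule norm_blinfun_compose)
  show "norm (1::'a bop) = 1"
  proof transfer
    have "norm (id_blinfun::('a \<Rightarrow>\<^sub>C real) \<Rightarrow>\<^sub>L ('a \<Rightarrow>\<^sub>C real)) \<le> 1" by (rule norm_blinfun_id_le)
    moreover have "norm (const_bcontfun 1::'a \<Rightarrow>\<^sub>C real) \<le> norm (id_blinfun::('a \<Rightarrow>\<^sub>C real) \<Rightarrow>\<^sub>L ('a \<Rightarrow>\<^sub>C real)) * norm (const_bcontfun 1::'a \<Rightarrow>\<^sub>C real)"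
      using norm_blinfun[of id_blinfun "const_bcontfun 1 :: 'a \<Rightarrow>\<^sub>C real"] by simp
    moreover have "norm (const_bcontfun 1::'a \<Rightarrow>\<^sub>C real) > 0" using one_ne_zero_aux by simp
    ultimately show "norm (id_blinfun::('a \<Rightarrow>\<^sub>C real) \<Rightarrow>\<^sub>L ('a \<Rightarrow>\<^sub>C real)) = 1"
      by (metis dual_order.antisym mult_le_cancel_right1 not_le)
  qed
qed
end

lemma bl_norm: "norm (bl x) = norm x" by transfer simp
lemma bl_minus: "bl (x - y) = bl x - bl y" by transfer simp
lemma bl_dist: "dist (bl x) (bl y) = dist x y"
proof -
  have "dist (bl x) (bl y) = norm (bl x - bl y)" by (rule dist_norm)
  also have "\<dots> = norm (bl (x - y))" by (simp only: bl_minus)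
  also have "\<dots> = norm (x - y)" by (rule bl_norm)
  finally show ?thesis by (simp only: dist_norm)
qed

instance bop :: (topological_space) banach
proof
  fix X :: "nat \<Rightarrow> 'a bop"
  assume "Cauchy X"
  have "Cauchy (\<lambda>n. bl (X n))"
  proof (rule metric_CauchyI)
    fix e :: real assume "e > 0"
    from metric_CauchyD[OF \<open>Cauchy X\<close> this] obtain M where M: "\<forall>m\<ge>M. \<forall>n\<ge>M. dist (X m) (X n) < e" by blast
    show "\<exists>M. \<forall>m\<ge>M. \<forall>n\<ge>M. dist (bl (X m)) (bl (X n)) < e"
      by (rule exI[of _ M], intro allI impI, subst bl_dist, use M in blast)
  qed
  then have "convergent (\<lambda>n. bl (X n))" by (rule Cauchy_convergent)
  then obtain L where L: "(\<lambda>n. bl (X n)) \<longlonglongrightarrow> L" unfolding convergent_def by (rule exE)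
  have "(\<lambda>n. dist (bl (X n)) (bl (Bop L))) \<longlonglongrightarrow> 0"
    using iffD1[OF tendsto_dist_iff L] by (simp only: Bop_inverse UNIV_I)
  moreover have "(\<lambda>n. dist (bl (X n)) (bl (Bop L))) = (\<lambda>n. dist (X n) (Bop L))"
    by (rule ext, rule bl_dist)
  ultimately have "(\<lambda>n. dist (X n) (Bop L)) \<longlonglongrightarrow> 0"
    by argo
  then have "X \<longlonglongrightarrow> Bop L" by (rule iffD2[OF tendsto_dist_iff])
  then show "convergent X" unfolding convergent_def by (rule exI)
qed

definition ap :: "'b::topological_space bop \<Rightarrow> ('b \<Rightarrow>\<^sub>C real) \<Rightarrow> ('b \<Rightarrow>\<^sub>C real)" where
  "ap x = blinfun_apply (bl x)"

definition mk :: "(('b::topological_space \<Rightarrow>\<^sub>C real) \<Rightarrow> ('b \<Rightarrow>\<^sub>C real)) \<Rightarrow> 'b bop" where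
  "mk f = Bop (Blinfun f)"

lemma ap_mk: "bounded_linear f \<Longrightarrow> ap (mk f) = f"
  unfolding ap_def mk_def by (simp add: Bop_inverse bounded_linear_Blinfun_apply)

lemma ap_times: "ap (x * y) v = ap x (ap y v)" unfolding ap_def by transfer simp
lemma ap_one[simp]: "ap 1 v = v" unfolding ap_def by transfer simp
lemma ap_zero[simp]: "ap 0 v = 0" unfolding ap_def by transfer simp
lemma ap_plus: "ap (x + y) v = ap x v + ap y v" unfolding ap_def by transfer (simp add: blinfun.add_left)
lemma ap_minus: "ap (x - y) v = ap x v - ap y v" unfolding ap_def by transfer (simp add: blinfun.diff_left)
lemma ap_scaleR: "ap (a *\<^sub>R x) v = a *\<^sub>R ap x v" unfolding ap_def by transfer (simp add: blinfun.scaleR_left)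
lemma ap_norm: "norm (ap x v) \<le> norm x * norm v" unfolding ap_def by transfer (rule norm_blinfun)
lemma bounded_linear_ap: "bounded_linear (ap x)" unfolding ap_def by (rule blinfun.bounded_linear_right)
lemma bounded_linear_ap_left: "bounded_linear (\<lambda>x. ap x v)"
proof
  show "ap (x + y) v = ap x v + ap y v" for x y by (rule ap_plus)
  show "ap (r *\<^sub>R x) v = r *\<^sub>R ap x v" for r x by (rule ap_scaleR)
  show "\<exists>K. \<forall>x. norm (ap x v) \<le> norm x * K"
    by (rule exI[of _ "norm v"]) (simp add: ap_norm)
qed
lemma ap_diff2: "ap x (u - v) = ap x u - ap x v" using bounded_linear_ap linear_diff bounded_linear.linear by blast
lemma ap_add2: "ap x (u + v) = ap x u + ap x v" using bounded_linear_ap linear_add bounded_linear.linear by blast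
lemma ap_scale2: "ap x (c *\<^sub>R u) = c *\<^sub>R ap x u" using bounded_linear_ap linear_scale bounded_linear.linear by blast
lemma ap_zero2[simp]: "ap x 0 = 0" using bounded_linear_ap linear_0 bounded_linear.linear by blast
lemma ap_power: "ap (x ^ k) v = (ap x ^^ k) v"
  by (induction k arbitrary: v) (auto simp: ap_times)
lemma ap_eqI: "(\<And>v. ap x v = ap y v) \<Longrightarrow> x = y"
  unfolding ap_def by (metis bl_inject blinfun_eqI)
lemma norm_bop_bound: "0 \<le> b \<Longrightarrow> (\<And>v. norm (ap x v) \<le> b * norm v) \<Longrightarrow> norm x \<le> b"
  unfolding ap_def by (metis bl_norm norm_blinfun_bound)


lemma exp_rem_bound:
  fixes W :: "'a::{real_normed_algebra_1,banach}"
  shows "norm (exp W - 1 - W) \<le> norm W ^ 2 * exp (norm W)"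
proof -
  have s: "(\<lambda>i. W ^ (i+2) /\<^sub>R fact (i+2)) sums (exp W - (1 + W))"
    using sums_split_initial_segment[OF exp_converges[of W], of 2] by (simp add: eval_nat_numeral)
  have b: "norm (W ^ (i+2) /\<^sub>R fact (i+2)) \<le> norm W ^ 2 * (norm W ^ i / fact i)" for i
  proof -
    have "norm (W ^ (i+2) /\<^sub>R fact (i+2)) = norm (W^(i+2)) / fact (i+2)"
    proof -
      have "\<bar>fact (i+2)::real\<bar> = fact (i+2)" by (rule abs_of_pos) (rule fact_gt_zero)
      then show ?thesis by (simp only: norm_scaleR abs_inverse divide_inverse_commute)
    qed
    also have "\<dots> \<le> norm W ^ (i+2) / fact (i+2)"
      by (intro divide_right_mono norm_power_ineq) simp
    also have "\<dots> \<le> norm W ^ (i+2) / fact i"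
      by (intro divide_left_mono fact_mono) (auto simp del: fact_Suc)
    also have "\<dots> = norm W^2 * (norm W ^ i / fact i)" by (simp add: power_add power2_eq_square)
    finally show ?thesis .
  qed
  have e: "(\<lambda>i. norm W ^ i / fact i) sums exp (norm W)"
    using exp_converges[of "norm W"] by (simp add: divide_inverse mult.commute)
  have sg: "(\<lambda>i. norm W ^ 2 * (norm W ^ i / fact i)) sums (norm W^2 * exp (norm W))"
    by (rule sums_mult[OF e])
  have "exp W - 1 - W = suminf (\<lambda>i. W^(i+2) /\<^sub>R fact (i+2))"
    using sums_unique[OF s] by (simp add: algebra_simps)
  then have "norm (exp W - 1 - W) = norm (suminf (\<lambda>i. W^(i+2) /\<^sub>R fact (i+2)))" by simp
  also have "\<dots> \<le> suminf (\<lambda>i. norm W ^ 2 * (norm W ^ i / fact i))"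
    by (rule norm_suminf_le[OF b]) (use sg in \<open>simp add: sums_iff\<close>)
  also have "\<dots> = norm W^2 * exp (norm W)" using sg sums_unique by metis
  finally show ?thesis .
qed

lemma pow_diff_bound_Suc:
  fixes X Y :: "'a::real_normed_algebra_1"
  assumes "norm X \<le> M" "norm Y \<le> M"
  shows "norm (X^(Suc k) - Y^(Suc k)) \<le> real (Suc k) * M^k * norm (X - Y)"
proof (induction k)
  case 0 then show ?case by simp
next
  case (Suc k)
  have M0: "0 \<le> M" using assms(1) norm_ge_zero order_trans by blast
  have eq: "X^(Suc (Suc k)) - Y^(Suc (Suc k)) = X * (X^(Suc k) - Y^(Suc k)) + (X - Y) * Y^(Suc k)"
    by (simp add: algebra_simps power_commutes)
  have "norm (X^(Suc (Suc k)) - Y^(Suc (Suc k))) \<le> norm (X * (X^(Suc k) - Y^(Suc k))) + norm ((X - Y) * Y^(Suc k))"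
    unfolding eq by (rule norm_triangle_ineq)
  also have "\<dots> \<le> norm X * norm (X^(Suc k) - Y^(Suc k)) + norm (X - Y) * norm (Y^(Suc k))"
    by (intro add_mono norm_mult_ineq)
  also have "\<dots> \<le> M * (real (Suc k) * M^k * norm (X - Y)) + norm (X - Y) * M^(Suc k)"
  proof (intro add_mono mult_mono)
    show "norm (Y ^ Suc k) \<le> M ^ Suc k"
      by (rule order_trans[OF norm_power_ineq]) (intro power_mono assms(2) norm_ge_zero)
  qed (use Suc.IH assms M0 in auto)
  also have "\<dots> = real (Suc (Suc k)) * M^(Suc k) * norm (X - Y)"
    by (simp add: algebra_simps)
  finally show ?case .
qed

lemma pow_diff_bound:
  fixes X Y :: "'a::real_normed_algebra_1"
  assumes "norm X \<le> M" "norm Y \<le> M" "1 \<le> M"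
  shows "norm (X^k - Y^k) \<le> real k * M^k * norm (X - Y)"
proof (cases k)
  case 0 then show ?thesis by simp
next
  case (Suc j)
  have "norm (X^k - Y^k) \<le> real k * M^j * norm (X - Y)"
    using pow_diff_bound_Suc[OF assms(1,2), of j] Suc by simp
  also have "\<dots> \<le> real k * M^k * norm (X - Y)"
  proof (intro mult_right_mono mult_left_mono)
    show "M ^ j \<le> M ^ k" using Suc assms(3) by (simp add: power_increasing)
  qed auto
  finally show ?thesis .
qed

lemma exp_scaleR_add:
  fixes Z :: "'a::{real_normed_algebra_1,banach}"
  shows "exp ((a + b) *\<^sub>R Z) = exp (a *\<^sub>R Z) * exp (b *\<^sub>R Z)"
proof -
  have "(a *\<^sub>R Z) * (b *\<^sub>R Z) = (b *\<^sub>R Z) * (a *\<^sub>R Z)" by (simp add: mult.commute)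
  then show ?thesis using exp_add_commuting[of "a *\<^sub>R Z" "b *\<^sub>R Z"] by (simp add: scaleR_add_left)
qed

lemma exp_scaleR_pow:
  fixes Z :: "'a::{real_normed_algebra_1,banach}"
  shows "exp (c *\<^sub>R Z) ^ k = exp ((real k * c) *\<^sub>R Z)"
proof (induction k)
  case 0 then show ?case by simp
next
  case (Suc k)
  have "exp (c *\<^sub>R Z) ^ Suc k = exp (c *\<^sub>R Z) * exp ((real k * c) *\<^sub>R Z)" using Suc by simp
  also have "\<dots> = exp ((c + real k * c) *\<^sub>R Z)" by (rule exp_scaleR_add[symmetric])
  finally show ?case by (simp add: algebra_simps)
qed

lemma norm_exp_scaleR_le:
  fixes Z :: "'a::{real_normed_algebra_1,banach}"
  assumes "0 \<le> t" "t \<le> R" "norm Z \<le> C"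
  shows "norm (exp (t *\<^sub>R Z)) \<le> exp (R * C)"
proof -
  have "norm (exp (t *\<^sub>R Z)) \<le> exp (norm (t *\<^sub>R Z))" by (rule norm_exp)
  also have "norm (t *\<^sub>R Z) \<le> R * C" using assms by (simp add: mult_mono)
  then have "exp (norm (t *\<^sub>R Z)) \<le> exp (R * C)" by simp
  finally show ?thesis .
qed


lemma floor_facts:
  assumes "0 \<le> t" "0 < e"
  shows "real (nat \<lfloor>t / e\<rfloor>) * e \<le> t" "t - real (nat \<lfloor>t / e\<rfloor>) * e < e"
        "0 \<le> t - real (nat \<lfloor>t / e\<rfloor>) * e"
proof -
  have f0: "0 \<le> \<lfloor>t / e\<rfloor>" using assms by simp
  then have r: "real (nat \<lfloor>t / e\<rfloor>) = of_int \<lfloor>t / e\<rfloor>" by simp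
  have a: "of_int \<lfloor>t / e\<rfloor> \<le> t / e" by (rule of_int_floor_le)
  have b: "t / e < of_int \<lfloor>t / e\<rfloor> + 1" by (rule real_of_int_floor_add_one_gt)
  have a': "of_int \<lfloor>t / e\<rfloor> * e \<le> t" using a pos_le_divide_eq[OF assms(2)] by blast
  have b': "t < (of_int \<lfloor>t / e\<rfloor> + 1) * e" using b pos_divide_less_eq[OF assms(2)] by blast
  show "real (nat \<lfloor>t / e\<rfloor>) * e \<le> t" unfolding r using a' .
  show "t - real (nat \<lfloor>t / e\<rfloor>) * e < e" unfolding r using b' by (simp add: algebra_simps)
  show "0 \<le> t - real (nat \<lfloor>t / e\<rfloor>) * e" unfolding r using a' by simp
qed

lemma exp_approx_step:
  fixes Z B :: "'a::{real_normed_algebra_1,banach}"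
  assumes eps: "0 < \<epsilon>" "\<epsilon> \<le> \<eta>" and eta: "\<eta> \<le> 1"
    and b: "norm (B - Z) \<le> \<eta>"
    and t: "0 \<le> t" "t \<le> R"
    and C: "C = norm Z + 1"
  shows "norm ((1 + \<epsilon> *\<^sub>R B)^(nat \<lfloor>t / \<epsilon>\<rfloor>) - exp (t *\<^sub>R Z))
     \<le> \<eta> * (exp (R * C) * (R * (1 + C^2 * exp C) + C^2 * exp C + C))"
proof -
  define k where "k = nat \<lfloor>t / \<epsilon>\<rfloor>"
  define s where "s = t - real k * \<epsilon>"
  define D where "D = C^2 * exp C"
  define K where "K = exp (R * C)"
  have kt: "real k * \<epsilon> \<le> t" and s1: "s < \<epsilon>" and s0: "0 \<le> s"
    using floor_facts[OF t(1) eps(1)] unfolding k_def s_def by auto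
  have C1: "1 \<le> C" "norm Z \<le> C" using C by auto
  have D0: "0 \<le> D" unfolding D_def by simp
  have K0: "0 \<le> K" unfolding K_def by simp
  have R0: "0 \<le> R" using t by simp
  have normB: "norm B \<le> C"
  proof -
    have "norm B \<le> norm Z + norm (B - Z)" using norm_triangle_ineq[of Z "B - Z"] by simp
    then show ?thesis using b eta C by simp
  qed
  define X where "X = 1 + \<epsilon> *\<^sub>R B"
  define Y where "Y = exp (\<epsilon> *\<^sub>R Z)"
  define M where "M = exp (\<epsilon> * C)"
  have M1: "1 \<le> M" unfolding M_def using eps C1 by simp
  have nX: "norm X \<le> M"
  proof -
    have "norm X \<le> norm (1::'a) + norm (\<epsilon> *\<^sub>R B)" unfolding X_def by (rule norm_triangle_ineq)
    also have "\<dots> = 1 + \<epsilon> * norm B" using eps by simp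
    also have "\<dots> \<le> 1 + \<epsilon> * C" using normB eps by (simp add: mult_left_mono)
    also have "\<dots> \<le> M" unfolding M_def using exp_ge_add_one_self[of "\<epsilon> * C"] by simp
    finally show ?thesis .
  qed
  have nY: "norm Y \<le> M"
  proof -
    have "norm Y \<le> exp (norm (\<epsilon> *\<^sub>R Z))" unfolding Y_def by (rule norm_exp)
    also have "\<dots> \<le> M" unfolding M_def using eps C1 by (simp add: mult_left_mono)
    finally show ?thesis .
  qed
  have Mk: "M^k \<le> K"
  proof -
    have "M^k = exp (real k * (\<epsilon> * C))" unfolding M_def by (simp add: exp_of_nat_mult[symmetric])
    also have "\<dots> \<le> K" unfolding K_def
    proof (subst exp_le_cancel_iff)
      have "real k * (\<epsilon> * C) = (real k * \<epsilon>) * C" by simp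
      also have "\<dots> \<le> R * C" using kt t C1 by (intro mult_right_mono) auto
      finally show "real k * (\<epsilon> * C) \<le> R * C" .
    qed
    finally show ?thesis .
  qed
  have nZe: "norm (\<epsilon> *\<^sub>R Z) \<le> \<epsilon> * C" using eps C1 by (simp add: mult_left_mono)
  have XY: "norm (X - Y) \<le> \<epsilon> * (norm (B - Z) + \<epsilon> * D)"
  proof -
    have eq: "X - Y = \<epsilon> *\<^sub>R (B - Z) - (exp (\<epsilon> *\<^sub>R Z) - 1 - \<epsilon> *\<^sub>R Z)"
      unfolding X_def Y_def by (simp add: algebra_simps)
    have r: "norm (exp (\<epsilon> *\<^sub>R Z) - 1 - \<epsilon> *\<^sub>R Z) \<le> (\<epsilon> * C)^2 * exp C"
    proof -
      have "norm (exp (\<epsilon> *\<^sub>R Z) - 1 - \<epsilon> *\<^sub>R Z) \<le> norm (\<epsilon> *\<^sub>R Z)^2 * exp (norm (\<epsilon> *\<^sub>R Z))"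
        by (rule exp_rem_bound)
      also have "\<dots> \<le> (\<epsilon> * C)^2 * exp C"
      proof (intro mult_mono power_mono)
        have "\<epsilon> * C \<le> C" using eps eta C1 by (intro mult_left_le_one_le) auto
        then show "exp (norm (\<epsilon> *\<^sub>R Z)) \<le> exp C" using nZe by simp
      qed (use nZe in auto)
      finally show ?thesis .
    qed
    have "norm (X - Y) \<le> norm (\<epsilon> *\<^sub>R (B - Z)) + norm (exp (\<epsilon> *\<^sub>R Z) - 1 - \<epsilon> *\<^sub>R Z)"
      unfolding eq by (rule norm_triangle_ineq4)
    also have "\<dots> \<le> \<epsilon> * norm (B - Z) + (\<epsilon> * C)^2 * exp C" using r eps by simp
    also have "\<dots> = \<epsilon> * (norm (B - Z) + \<epsilon> * D)" unfolding D_def by (simp add: algebra_simps power2_eq_square)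
    finally show ?thesis .
  qed
  have part1: "norm (X^k - Y^k) \<le> K * R * (\<eta> * (1 + D))"
  proof -
    have "norm (X^k - Y^k) \<le> real k * M^k * norm (X - Y)" by (rule pow_diff_bound[OF nX nY M1])
    also have "\<dots> \<le> real k * K * (\<epsilon> * (norm (B - Z) + \<epsilon> * D))"
      by (intro mult_mono XY Mk) (use D0 K0 M1 in auto)
    also have "\<dots> = K * (real k * \<epsilon>) * (norm (B - Z) + \<epsilon> * D)" by simp
    also have "\<dots> \<le> K * R * (\<eta> * (1 + D))"
    proof (intro mult_mono)
      show "real k * \<epsilon> \<le> R" using kt t by simp
      have "\<epsilon> * D \<le> \<eta> * D" using eps D0 by (simp add: mult_right_mono)
      then show "norm (B - Z) + \<epsilon> * D \<le> \<eta> * (1 + D)" using b by (simp add: algebra_simps)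
    qed (use K0 R0 eps D0 in auto)
    finally show ?thesis .
  qed
  have Yk: "Y^k = exp ((real k * \<epsilon>) *\<^sub>R Z)" unfolding Y_def by (rule exp_scaleR_pow)
  have part2: "norm (Y^k - exp (t *\<^sub>R Z)) \<le> K * (\<eta> * (D + C))"
  proof -
    have te: "t = real k * \<epsilon> + s" unfolding s_def by simp
    have "exp (t *\<^sub>R Z) = exp ((real k * \<epsilon>) *\<^sub>R Z) * exp (s *\<^sub>R Z)"
      unfolding te by (rule exp_scaleR_add)
    then have eq: "Y^k - exp (t *\<^sub>R Z) = exp ((real k * \<epsilon>) *\<^sub>R Z) * (- ((exp (s *\<^sub>R Z) - 1 - s *\<^sub>R Z) + s *\<^sub>R Z))"
      unfolding Yk by (simp add: algebra_simps)
    have n1: "norm (exp ((real k * \<epsilon>) *\<^sub>R Z)) \<le> K"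
      unfolding K_def by (rule norm_exp_scaleR_le) (use kt t eps C1 in auto)
    have nsZ: "norm (s *\<^sub>R Z) \<le> s * C" using s0 C1 by (simp add: mult_left_mono)
    have sC: "s * C \<le> C" using s0 s1 eps eta C1 by (intro mult_left_le_one_le) auto
    have n2: "norm (exp (s *\<^sub>R Z) - 1 - s *\<^sub>R Z) \<le> \<eta> * D"
    proof -
      have "norm (exp (s *\<^sub>R Z) - 1 - s *\<^sub>R Z) \<le> norm (s *\<^sub>R Z)^2 * exp (norm (s *\<^sub>R Z))"
        by (rule exp_rem_bound)
      also have "\<dots> \<le> (s * C)^2 * exp C"
        by (intro mult_mono power_mono) (use nsZ sC in auto)
      also have "\<dots> = s^2 * D" unfolding D_def by (simp add: power_mult_distrib)
      also have "\<dots> \<le> \<eta> * D"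
      proof (rule mult_right_mono[OF _ D0])
        have "s^2 \<le> s * 1" unfolding power2_eq_square using s0 s1 eps eta
          by (intro mult_left_mono) auto
        then show "s^2 \<le> \<eta>" using s1 eps by simp
      qed
      finally show ?thesis .
    qed
    have n3: "norm (s *\<^sub>R Z) \<le> \<eta> * C"
    proof -
      have "s * C \<le> \<eta> * C" using s0 s1 eps C1 by (intro mult_right_mono) auto
      then show ?thesis using nsZ by simp
    qed
    have "norm (Y^k - exp (t *\<^sub>R Z)) \<le> norm (exp ((real k * \<epsilon>) *\<^sub>R Z)) * norm (- ((exp (s *\<^sub>R Z) - 1 - s *\<^sub>R Z) + s *\<^sub>R Z))"
      unfolding eq by (rule norm_mult_ineq)
    also have "\<dots> \<le> K * (\<eta> * D + \<eta> * C)"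
    proof (intro mult_mono)
      show "norm (- ((exp (s *\<^sub>R Z) - 1 - s *\<^sub>R Z) + s *\<^sub>R Z)) \<le> \<eta> * D + \<eta> * C"
        unfolding norm_minus_cancel using norm_triangle_ineq[of "exp (s *\<^sub>R Z) - 1 - s *\<^sub>R Z" "s *\<^sub>R Z"] n2 n3
        by linarith
    qed (use n1 K0 in auto)
    also have "\<dots> = K * (\<eta> * (D + C))" by (simp add: algebra_simps)
    finally show ?thesis .
  qed
  have "X^k - exp (t *\<^sub>R Z) = (X^k - Y^k) + (Y^k - exp (t *\<^sub>R Z))" by simp
  then have "norm (X^k - exp (t *\<^sub>R Z)) \<le> norm (X^k - Y^k) + norm (Y^k - exp (t *\<^sub>R Z))"
    by (metis norm_triangle_ineq)
  also have "\<dots> \<le> K * R * (\<eta> * (1 + D)) + K * (\<eta> * (D + C))" using part1 part2 by simp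
  also have "\<dots> = \<eta> * (K * (R * (1 + D) + D + C))" by (simp add: algebra_simps)
  finally show ?thesis unfolding X_def k_def K_def D_def .
qed


lemma exp_approx:
  fixes Z :: "'a::{real_normed_algebra_1,banach}" and Bn :: "nat \<Rightarrow> 'a"
  assumes B: "Bn \<longlonglongrightarrow> Z" and E: "\<epsilon> \<longlonglongrightarrow> 0" and pos: "\<And>n. 0 < \<epsilon> n" and e: "0 < e"
  shows "\<exists>N. \<forall>n\<ge>N. \<forall>t\<in>{0..R}. norm ((1 + \<epsilon> n *\<^sub>R Bn n)^(nat \<lfloor>t / \<epsilon> n\<rfloor>) - exp (t *\<^sub>R Z)) < e"
proof -
  define C where "C = norm Z + 1"
  define R' where "R' = max R 0"
  define Q where "Q = exp (R' * C) * (R' * (1 + C^2 * exp C) + C^2 * exp C + C)"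
  have C0: "0 \<le> C" unfolding C_def by simp
  have R'0: "0 \<le> R'" unfolding R'_def by simp
  have Q0: "0 \<le> Q" unfolding Q_def using C0 R'0 by simp
  define \<eta> where "\<eta> = min 1 (e / (2 * (Q + 1)))"
  have eta0: "0 < \<eta>" unfolding \<eta>_def using e Q0 by simp
  have eta1: "\<eta> \<le> 1" unfolding \<eta>_def by simp
  have etaQ: "\<eta> * Q < e"
  proof -
    have "\<eta> * Q \<le> e / (2 * (Q + 1)) * Q" unfolding \<eta>_def using Q0 by (intro mult_right_mono) auto
    also have "\<dots> = (e/2) * (Q/(Q+1))" by simp
    also have "\<dots> \<le> (e/2) * 1" using Q0 e by (intro mult_left_mono) auto
    also have "\<dots> < e" using e by simp
    finally show ?thesis .
  qed
  have ev1: "\<forall>\<^sub>F n in sequentially. norm (Bn n - Z) < \<eta>"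
    using tendstoD[OF B eta0] by (simp add: dist_norm)
  have ev2: "\<forall>\<^sub>F n in sequentially. \<epsilon> n < \<eta>"
  proof -
    have "\<forall>\<^sub>F n in sequentially. \<bar>\<epsilon> n\<bar> < \<eta>" using tendstoD[OF E eta0] by (simp add: dist_norm)
    then show ?thesis by (rule eventually_mono) simp
  qed
  from eventually_conj[OF ev1 ev2] obtain N where N: "\<And>n. n \<ge> N \<Longrightarrow> norm (Bn n - Z) < \<eta> \<and> \<epsilon> n < \<eta>"
    unfolding eventually_sequentially by blast
  have "\<forall>n\<ge>N. \<forall>t\<in>{0..R}. norm ((1 + \<epsilon> n *\<^sub>R Bn n)^(nat \<lfloor>t / \<epsilon> n\<rfloor>) - exp (t *\<^sub>R Z)) < e"
  proof (intro allI impI ballI)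
    fix n t assume n: "N \<le> n" and t: "t \<in> {0..R}"
    have "norm ((1 + \<epsilon> n *\<^sub>R Bn n)^(nat \<lfloor>t / \<epsilon> n\<rfloor>) - exp (t *\<^sub>R Z)) \<le> \<eta> * Q"
      unfolding Q_def
      by (rule exp_approx_step[OF pos _ eta1 _ _ _ C_def]) (use N[OF n] t R'_def in auto)
    with etaQ show "norm ((1 + \<epsilon> n *\<^sub>R Bn n)^(nat \<lfloor>t / \<epsilon> n\<rfloor>) - exp (t *\<^sub>R Z)) < e" by simp
  qed
  then show ?thesis by blast
qed


lemma apply_bcontfun_sum:
  "apply_bcontfun (\<Sum>i\<in>S. f i) x = (\<Sum>i\<in>S. apply_bcontfun (f i) x)"
  by (induction S rule: infinite_finite_induct) auto

lemma reproduce: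
  fixes v :: "nat \<Rightarrow> ('b::topological_space \<Rightarrow>\<^sub>C real)"
  assumes delta: "\<forall>i<d. \<forall>j<d. apply_bcontfun (v i) (p j) = (if i = j then 1 else 0)"
    and x: "x \<in> span (v ` {..<d})"
  shows "x = (\<Sum>i<d. apply_bcontfun x (p i) *\<^sub>R v i)"
proof -
  let ?P = "{x. x = (\<Sum>i<d. apply_bcontfun x (p i) *\<^sub>R v i)}"
  have "subspace ?P"
    unfolding subspace_def
  proof (intro conjI ballI allI)
    show "0 \<in> ?P" by simp
    fix x y assume x: "x \<in> ?P" and y: "y \<in> ?P"
    have "x + y = (\<Sum>i<d. apply_bcontfun x (p i) *\<^sub>R v i) + (\<Sum>i<d. apply_bcontfun y (p i) *\<^sub>R v i)"
      using x y by simp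
    also have "\<dots> = (\<Sum>i<d. apply_bcontfun (x + y) (p i) *\<^sub>R v i)"
      by (simp add: sum.distrib[symmetric] scaleR_add_left)
    finally show "x + y \<in> ?P" by (simp only: mem_Collect_eq)
  next
    fix c :: real and x assume x: "x \<in> ?P"
    have "c *\<^sub>R x = c *\<^sub>R (\<Sum>i<d. apply_bcontfun x (p i) *\<^sub>R v i)" using x by simp
    also have "\<dots> = (\<Sum>i<d. apply_bcontfun (c *\<^sub>R x) (p i) *\<^sub>R v i)"
      by (simp add: scaleR_sum_right)
    finally show "c *\<^sub>R x \<in> ?P" by (simp only: mem_Collect_eq)
  qed
  note subsp = this
  have sub: "v ` {..<d} \<subseteq> ?P"
  proof
    fix y assume "y \<in> v ` {..<d}"
    then obtain j where j: "j < d" "y = v j" by auto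
    have "(\<Sum>i<d. apply_bcontfun (v j) (p i) *\<^sub>R v i) = (\<Sum>i<d. (if i = j then v i else 0))"
      using delta j by (intro sum.cong) auto
    also have "\<dots> = v j" using j by (simp add: sum.delta)
    finally show "y \<in> ?P" using j by simp
  qed
  have "span (v ` {..<d}) \<subseteq> ?P" by (rule span_minimal[OF sub subsp])
  with x show ?thesis by auto
qed

lemma dual_basis:
  fixes B :: "('b::topological_space \<Rightarrow>\<^sub>C real) set"
  assumes "finite B"
  shows "\<exists>(d::nat) p v. (\<forall>i<d. v i \<in> span B) \<and>
           (\<forall>i<d. \<forall>j<d. apply_bcontfun (v i) (p j) = (if i = j then 1 else 0)) \<and>
           B \<subseteq> span (v ` {..<d})"
  using assms
proof (induction B rule: finite_induct)
  case empty
  show ?case by (intro exI[of _ "0::nat"]) auto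
next
  case (insert b B)
  from insert.IH obtain d :: nat and p v where
    vB: "\<forall>i<d. v i \<in> span B" and
    delta: "\<forall>i<d. \<forall>j<d. apply_bcontfun (v i) (p j) = (if i = j then 1 else 0)" and
    Bsub: "B \<subseteq> span (v ` {..<d})" by blast
  define r where "r = b - (\<Sum>i<d. apply_bcontfun b (p i) *\<^sub>R v i)"
  have sumB: "(\<Sum>i<d. apply_bcontfun b (p i) *\<^sub>R v i) \<in> span B"
    using vB by (intro span_sum span_scale) (auto intro: span_base)
  have spanmono: "span B \<subseteq> span (insert b B)" by (rule span_mono) auto
  have r_span: "r \<in> span (insert b B)"
    unfolding r_def using sumB spanmono by (intro span_diff) (auto intro: span_base)
  have r_p: "apply_bcontfun r (p j) = 0" if "j < d" for j
  proof -
    have "(\<Sum>i<d. apply_bcontfun b (p i) * apply_bcontfun (v i) (p j)) = (\<Sum>i<d. if i = j then apply_bcontfun b (p i) else 0)"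
      using delta that by (intro sum.cong) auto
    also have "\<dots> = apply_bcontfun b (p j)" using that by (simp add: sum.delta)
    finally show ?thesis unfolding r_def by (simp add: apply_bcontfun_sum)
  qed
  show ?case
  proof (cases "r = 0")
    case True
    have "b = (\<Sum>i<d. apply_bcontfun b (p i) *\<^sub>R v i)" using True unfolding r_def by simp
    also have "\<dots> \<in> span (v ` {..<d})" by (intro span_sum span_scale) (auto intro: span_base)
    finally have "b \<in> span (v ` {..<d})" .
    then show ?thesis using vB delta Bsub spanmono
      by (intro exI[of _ d] exI[of _ p] exI[of _ v]) auto
  next
    case False
    then obtain q where q: "apply_bcontfun r q \<noteq> 0" by (metis bcontfun_eqI zero_bcontfun.rep_eq)
    define w where "w = r /\<^sub>R apply_bcontfun r q"
    have wq: "apply_bcontfun w q = 1" unfolding w_def using q by simp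
    have wp: "apply_bcontfun w (p j) = 0" if "j < d" for j unfolding w_def using r_p[OF that] by simp
    have w_span: "w \<in> span (insert b B)" unfolding w_def using r_span by (rule span_scale)
    define v' where "v' = (\<lambda>i. if i = d then w else v i - apply_bcontfun (v i) q *\<^sub>R w)"
    define p' where "p' = p(d := q)"
    have v'_span: "\<forall>i<Suc d. v' i \<in> span (insert b B)"
      unfolding v'_def using vB spanmono w_span by (auto intro!: span_diff span_scale)
    have delta': "\<forall>i<Suc d. \<forall>j<Suc d. apply_bcontfun (v' i) (p' j) = (if i = j then 1 else 0)"
      unfolding v'_def p'_def using delta wq wp by (auto simp: less_Suc_eq)
    have sub1: "v ` {..<d} \<subseteq> span (v' ` {..<Suc d})"
    proof
      fix y assume "y \<in> v ` {..<d}"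
      then obtain i where i: "i < d" "y = v i" by auto
      have "v i = v' i + apply_bcontfun (v i) q *\<^sub>R v' d" unfolding v'_def using i by simp
      also have "\<dots> \<in> span (v' ` {..<Suc d})"
        using i by (intro span_add span_scale) (auto intro: span_base)
      finally show "y \<in> span (v' ` {..<Suc d})" using i by simp
    qed
    have spv: "span (v ` {..<d}) \<subseteq> span (v' ` {..<Suc d})"
      by (rule span_minimal[OF sub1 subspace_span])
    have rv: "apply_bcontfun r q *\<^sub>R v' d = r" unfolding v'_def w_def using q by simp
    have "b = apply_bcontfun r q *\<^sub>R v' d + (\<Sum>i<d. apply_bcontfun b (p i) *\<^sub>R v i)"
      unfolding rv by (simp add: r_def)
    also have "\<dots> \<in> span (v' ` {..<Suc d})"
    proof (intro span_add span_scale)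
      show "v' d \<in> span (v' ` {..<Suc d})" by (auto intro: span_base)
      have "(\<Sum>i<d. apply_bcontfun b (p i) *\<^sub>R v i) \<in> span (v ` {..<d})"
        by (intro span_sum span_scale) (auto intro: span_base)
      then show "(\<Sum>i<d. apply_bcontfun b (p i) *\<^sub>R v i) \<in> span (v' ` {..<Suc d})" using spv by blast
    qed
    finally have "b \<in> span (v' ` {..<Suc d})" .
    then have "insert b B \<subseteq> span (v' ` {..<Suc d})" using Bsub spv by blast
    then show ?thesis using v'_span delta'
      by (intro exI[of _ "Suc d"] exI[of _ p'] exI[of _ v']) auto
  qed
qed


locale setting =
  fixes lev :: "'l \<Rightarrow> nat"
    and pd :: "'l \<Rightarrow> 'l \<Rightarrow> real"
    and M :: "'l \<Rightarrow> real"
    and \<iota> :: "nat \<Rightarrow> 'l \<Rightarrow> 'b::topological_space"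
    and \<F> :: "('b \<Rightarrow>\<^sub>C real) set"
    and \<F>m :: "nat \<Rightarrow> ('b \<Rightarrow>\<^sub>C real) set"
    and \<epsilon> :: "nat \<Rightarrow> real"
    and A :: "('b \<Rightarrow>\<^sub>C real) \<Rightarrow> ('b \<Rightarrow>\<^sub>C real)"
  assumes kernel: "graded_down_kernel lev pd"
    and coh: "coherent_system lev pd M"
    and Mpos: "\<And>la. M la > 0"
    and A2: "\<And>U. open U \<Longrightarrow> U \<noteq> {} \<Longrightarrow>
               \<exists>N. \<forall>n\<ge>N. U \<inter> \<iota> n ` level_set lev n \<noteq> {}"
    and A3_F: "subspace \<F>" "closure \<F> = UNIV"
    and A3_Fm: "\<And>m. subspace (\<F>m m)" "\<And>m. \<exists>B. finite B \<and> \<F>m m = span B"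
               "\<And>m. \<F>m m \<subseteq> \<F>m (Suc m)" "(\<Union>m. \<F>m m) = \<F>"
    and A3_inj: "\<And>m. \<exists>N. \<forall>n\<ge>N. inj_on (proj lev \<iota> n) (\<F>m m)"
    and A4_eps: "\<And>n. \<epsilon> n > 0" "\<epsilon> \<longlonglongrightarrow> 0"
    and A4: "\<And>m f. f \<in> \<F>m m \<Longrightarrow>
               \<exists>g. (\<forall>\<^sub>F n in sequentially. g n \<in> \<F>m m \<and>
                      proj lev \<iota> n (g n) =
                        (\<lambda>la. (T_op lev pd M n (proj lev \<iota> n f) la - proj lev \<iota> n f la) / \<epsilon> n))
                    \<and> g \<longlonglongrightarrow> A f"
    and A5: "const_bcontfun 1 \<in> \<F>"
begin

abbreviation "L n \<equiv> level_set lev n"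
abbreviation "T n \<equiv> T_op lev pd M n"
abbreviation "pr n \<equiv> proj lev \<iota> n"

lemma fin_L: "finite (L n)"
  using kernel unfolding graded_down_kernel_def by blast

lemma pd_nonneg: "pd a b \<ge> 0"
  using kernel unfolding graded_down_kernel_def by blast

lemma p_up_nonneg: "p_up pd M a b \<ge> 0"
  unfolding p_up_def using Mpos[of a] Mpos[of b] pd_nonneg[of b a] by simp

lemma L_iff: "la \<in> L n \<longleftrightarrow> lev la = n"
  unfolding level_set_def by simp

lemma pd_sum1: "nu \<in> L (Suc n) \<Longrightarrow> (\<Sum>la'\<in>L n. pd nu la') = 1"
proof -
  assume nu: "nu \<in> L (Suc n)"
  then have "lev nu \<ge> 1" "lev nu - 1 = n" by (auto simp: L_iff)
  then show ?thesis using kernel unfolding graded_down_kernel_def by metis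
qed

lemma p_up_sum1: "la \<in> L n \<Longrightarrow> (\<Sum>nu\<in>L (Suc n). p_up pd M la nu) = 1"
proof -
  assume la: "la \<in> L n"
  have "(\<Sum>nu\<in>L (Suc n). p_up pd M la nu) = (\<Sum>nu\<in>L (Suc n). M nu * pd nu la) / M la"
    unfolding p_up_def by (simp add: sum_divide_distrib)
  also have "(\<Sum>nu\<in>L (Suc n). M nu * pd nu la) = M la"
    using coh la unfolding coherent_system_def by blast
  finally show ?thesis using Mpos[of la] by simp
qed

lemma T_eval: "la \<in> L n \<Longrightarrow> T n g la = (\<Sum>nu\<in>L (Suc n). p_up pd M la nu * (\<Sum>la'\<in>L n. pd nu la' * g la'))"
  unfolding T_op_def by (simp add: L_iff)

lemma T_out: "la \<notin> L n \<Longrightarrow> T n g la = 0"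
  unfolding T_op_def by (simp add: L_iff)

lemma T_bound:
  assumes "\<forall>la\<in>L n. \<bar>g la\<bar> \<le> c" "la \<in> L n"
  shows "\<bar>T n g la\<bar> \<le> c"
proof -
  have "\<bar>T n g la\<bar> \<le> (\<Sum>nu\<in>L (Suc n). p_up pd M la nu * (\<Sum>la'\<in>L n. pd nu la' * c))"
    unfolding T_eval[OF assms(2)]
  proof (rule order_trans[OF sum_abs], intro sum_mono)
    fix nu assume "nu \<in> L (Suc n)"
    have "\<bar>\<Sum>la'\<in>L n. pd nu la' * g la'\<bar> \<le> (\<Sum>la'\<in>L n. pd nu la' * c)"
    proof (rule order_trans[OF sum_abs], intro sum_mono)
      fix la' assume "la' \<in> L n"
      then show "\<bar>pd nu la' * g la'\<bar> \<le> pd nu la' * c"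
        using assms(1) pd_nonneg[of nu la'] by (simp add: abs_mult mult_left_mono)
    qed
    then show "\<bar>p_up pd M la nu * (\<Sum>la'\<in>L n. pd nu la' * g la')\<bar> \<le> p_up pd M la nu * (\<Sum>la'\<in>L n. pd nu la' * c)"
      using p_up_nonneg[of la nu] by (simp add: abs_mult mult_left_mono)
  qed
  also have "\<dots> = c"
    using p_up_sum1[OF assms(2)] pd_sum1
    by (simp add: sum_distrib_right[symmetric] mult.assoc[symmetric] sum_distrib_left[symmetric])
  finally show ?thesis .
qed

lemma T_nonneg:
  assumes "\<forall>la\<in>L n. 0 \<le> g la"
  shows "0 \<le> T n g la"
proof (cases "la \<in> L n")
  case True
  show ?thesis unfolding T_eval[OF True]
    using assms p_up_nonneg pd_nonneg by (intro sum_nonneg mult_nonneg_nonneg) auto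
next
  case False then show ?thesis by (simp add: T_out)
qed

lemma T_const: "la \<in> L n \<Longrightarrow> T n (\<lambda>x. if lev x = n then 1 else 0) la = 1"
proof -
  assume la: "la \<in> L n"
  have "T n (\<lambda>x. if lev x = n then 1 else 0) la = (\<Sum>nu\<in>L (Suc n). p_up pd M la nu * (\<Sum>la'\<in>L n. pd nu la'))"
    unfolding T_eval[OF la] by (intro sum.cong refl) (simp add: L_iff)
  also have "\<dots> = (\<Sum>nu\<in>L (Suc n). p_up pd M la nu)" using pd_sum1 by simp
  also have "\<dots> = 1" by (rule p_up_sum1[OF la])
  finally show ?thesis .
qed

lemma T_diff: "T n (\<lambda>x. g x - h x) = (\<lambda>x. T n g x - T n h x)"
  unfolding T_op_def by (auto simp: sum_subtractf right_diff_distrib)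

lemma T_lin: "T n (\<lambda>x. g x + c * h x) = (\<lambda>x. T n g x + c * T n h x)"
  unfolding T_op_def by (auto simp: sum.distrib distrib_left sum_distrib_left mult.left_commute)

lemma Tk_bound:
  assumes "\<forall>la\<in>L n. \<bar>g la\<bar> \<le> c"
  shows "\<forall>la\<in>L n. \<bar>(T n ^^ k) g la\<bar> \<le> c"
  by (induction k) (use assms T_bound in auto)

lemma Tk_nonneg:
  assumes "\<forall>la\<in>L n. 0 \<le> g la"
  shows "\<forall>la\<in>L n. 0 \<le> (T n ^^ k) g la"
  by (induction k) (use assms T_nonneg in auto)

lemma Tk_diff: "(T n ^^ k) (\<lambda>x. g x - h x) = (\<lambda>x. (T n ^^ k) g x - (T n ^^ k) h x)"
  by (induction k) (auto simp: T_diff)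

lemma pr_eval: "la \<in> L n \<Longrightarrow> pr n f la = apply_bcontfun f (\<iota> n la)"
  unfolding proj_def by (simp add: L_iff)

lemma pr_bound: "\<bar>pr n f la\<bar> \<le> norm f"
  unfolding proj_def using norm_bounded[of f] by auto

lemma pr_diff: "pr n (f - g) = (\<lambda>x. pr n f x - pr n g x)"
  unfolding proj_def by auto

lemma pr_lin: "pr n (f + c *\<^sub>R g) = (\<lambda>x. pr n f x + c * pr n g x)"
  unfolding proj_def by auto

lemma pr_linear: "linear (\<lambda>f. pr n f la)"
  by (rule linearI) (auto simp: proj_def)

lemma pr_const: "pr n (const_bcontfun 1) = (\<lambda>x. if lev x = n then 1 else 0)"
  unfolding proj_def by auto

lemma Dn_linear: "linear (\<lambda>f. (T n (pr n f) la - pr n f la) / \<epsilon> n)"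
proof (rule linearI)
  fix f g :: "'b \<Rightarrow>\<^sub>C real" and c :: real
  have "pr n (f + g) = (\<lambda>x. pr n f x + 1 * pr n g x)" using pr_lin[of n f 1 g] by simp
  then show "(T n (pr n (f + g)) la - pr n (f + g) la) / \<epsilon> n =
        (T n (pr n f) la - pr n f la) / \<epsilon> n + (T n (pr n g) la - pr n g la) / \<epsilon> n"
    using T_lin[of n "pr n f" 1 "pr n g"] by (simp add: add_diff_add add_divide_distrib)
  have "pr n (c *\<^sub>R f) = (\<lambda>x. pr n 0 x + c * pr n f x)" using pr_lin[of n 0 c f] by simp
  moreover have "pr n 0 = (\<lambda>x. 0)" unfolding proj_def by (rule ext) simp
  moreover have "T n (\<lambda>x. 0) = (\<lambda>x. 0)" unfolding T_op_def by (rule ext) simp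
  ultimately show "(T n (pr n (c *\<^sub>R f)) la - pr n (c *\<^sub>R f) la) / \<epsilon> n =
        c *\<^sub>R ((T n (pr n f) la - pr n f la) / \<epsilon> n)"
    using T_lin[of n "\<lambda>x. 0" c "pr n f"] by (simp add: right_diff_distrib)
qed

lemma upper_from_levels:
  fixes y :: "'b \<Rightarrow>\<^sub>C real"
  assumes "\<And>\<delta>. \<delta> > 0 \<Longrightarrow> \<forall>\<^sub>F n in sequentially. \<forall>la\<in>L n. apply_bcontfun y (\<iota> n la) \<le> c + \<delta>"
  shows "apply_bcontfun y x \<le> c"
proof (rule ccontr)
  assume "\<not> apply_bcontfun y x \<le> c"
  then have gt: "c < apply_bcontfun y x" by simp
  define \<delta> where "\<delta> = (apply_bcontfun y x - c) / 2"
  have d0: "\<delta> > 0" unfolding \<delta>_def using gt by simp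
  define U where "U = {z. c + \<delta> < apply_bcontfun y z}"
  have "open U" unfolding U_def
    by (rule open_Collect_less) (auto intro: continuous_intros)
  moreover have "x \<in> U" unfolding U_def \<delta>_def using gt by (simp add: field_simps)
  ultimately obtain N1 where N1: "\<forall>n\<ge>N1. U \<inter> \<iota> n ` L n \<noteq> {}" using A2 by blast
  from assms[OF d0] obtain N2 where N2: "\<forall>n\<ge>N2. \<forall>la\<in>L n. apply_bcontfun y (\<iota> n la) \<le> c + \<delta>"
    unfolding eventually_sequentially by blast
  have "U \<inter> \<iota> (max N1 N2) ` L (max N1 N2) \<noteq> {}" using N1 by simp
  then obtain la where la: "la \<in> L (max N1 N2)" "\<iota> (max N1 N2) la \<in> U" by blast
  with N2 have "apply_bcontfun y (\<iota> (max N1 N2) la) \<le> c + \<delta>" by simp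
  with la(2) show False unfolding U_def by simp
qed

lemma norm_from_levels:
  fixes y :: "'b \<Rightarrow>\<^sub>C real"
  assumes "\<And>\<delta>. \<delta> > 0 \<Longrightarrow> \<forall>\<^sub>F n in sequentially. \<forall>la\<in>L n. \<bar>apply_bcontfun y (\<iota> n la)\<bar> \<le> c + \<delta>"
  shows "norm y \<le> c"
proof (rule norm_bound)
  fix x
  have "apply_bcontfun y x \<le> c"
  proof (rule upper_from_levels)
    fix \<delta> :: real assume d: "\<delta> > 0"
    show "\<forall>\<^sub>F n in sequentially. \<forall>la\<in>L n. apply_bcontfun y (\<iota> n la) \<le> c + \<delta>"
      by (rule eventually_mono[OF assms[OF d]]) auto
  qed
  moreover have "apply_bcontfun (- y) x \<le> c"
  proof (rule upper_from_levels)
    fix \<delta> :: real assume d: "\<delta> > 0"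
    show "\<forall>\<^sub>F n in sequentially. \<forall>la\<in>L n. apply_bcontfun (- y) (\<iota> n la) \<le> c + \<delta>"
      by (rule eventually_mono[OF assms[OF d]]) auto
  qed
  ultimately show "norm (apply_bcontfun y x) \<le> c" by simp
qed

lemma nonneg_from_levels:
  fixes y :: "'b \<Rightarrow>\<^sub>C real"
  assumes "\<And>\<delta>. \<delta> > 0 \<Longrightarrow> \<forall>\<^sub>F n in sequentially. \<forall>la\<in>L n. - \<delta> \<le> apply_bcontfun y (\<iota> n la)"
  shows "0 \<le> apply_bcontfun y x"
proof -
  have "apply_bcontfun (- y) x \<le> 0"
  proof (rule upper_from_levels)
    fix \<delta> :: real assume d: "\<delta> > 0"
    show "\<forall>\<^sub>F n in sequentially. \<forall>la\<in>L n. apply_bcontfun (- y) (\<iota> n la) \<le> 0 + \<delta>"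
      by (rule eventually_mono[OF assms[OF d]]) auto
  qed
  then show ?thesis by simp
qed

end


lemma eval_bl: "bounded_linear (\<lambda>f::'b::topological_space \<Rightarrow>\<^sub>C real. apply_bcontfun f x)"
proof
  show "apply_bcontfun (f + g) x = apply_bcontfun f x + apply_bcontfun g x" for f g :: "'b \<Rightarrow>\<^sub>C real" by simp
  show "apply_bcontfun (r *\<^sub>R f) x = r *\<^sub>R apply_bcontfun f x" for r and f :: "'b \<Rightarrow>\<^sub>C real" by simp
  show "\<exists>K. \<forall>f::'b \<Rightarrow>\<^sub>C real. norm (apply_bcontfun f x) \<le> norm f * K"
  proof (rule exI[of _ 1], intro allI)
    fix f :: "'b \<Rightarrow>\<^sub>C real"
    show "norm (apply_bcontfun f x) \<le> norm f * 1" using norm_bounded[of f x] by simp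
  qed
qed

lemma bl_finsum: "bounded_linear (\<lambda>f::'b::topological_space \<Rightarrow>\<^sub>C real. \<Sum>i<d. apply_bcontfun f (p i) *\<^sub>R w i)"
  by (intro bounded_linear_sum bounded_linear_compose[OF bounded_linear_scaleR_left eval_bl])

lemma norm_finsum_le:
  fixes f :: "'b::topological_space \<Rightarrow>\<^sub>C real"
  shows "norm (\<Sum>i<d. apply_bcontfun f (p i) *\<^sub>R w i) \<le> norm f * (\<Sum>i<d. norm (w i))"
proof -
  have "norm (\<Sum>i<d. apply_bcontfun f (p i) *\<^sub>R w i) \<le> (\<Sum>i<d. norm (apply_bcontfun f (p i) *\<^sub>R w i))"
    by (rule norm_sum)
  also have "\<dots> \<le> (\<Sum>i<d. norm f * norm (w i))"
    by (intro sum_mono) (simp add: mult_right_mono norm_bounded[of f, simplified])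
  also have "\<dots> = norm f * (\<Sum>i<d. norm (w i))" by (simp add: sum_distrib_left)
  finally show ?thesis .
qed

context setting
begin

lemma m_data:
  "\<exists>P Ah Bn N. bounded_linear P \<and> (\<forall>f. P f \<in> \<F>m m) \<and> (\<forall>f\<in>\<F>m m. P f = f) \<and>
     (\<forall>f\<in>\<F>m m. A f = ap Ah f) \<and> (\<forall>f. ap Ah f \<in> \<F>m m) \<and>
     (\<forall>n\<ge>N. \<forall>f\<in>\<F>m m. ap (Bn n) f \<in> \<F>m m \<and>
          pr n (ap (Bn n) f) = (\<lambda>la. (T n (pr n f) la - pr n f la) / \<epsilon> n)) \<and>
     Bn \<longlonglongrightarrow> Ah"
proof -
  obtain B where B: "finite B" "\<F>m m = span B" using A3_Fm(2) by blast
  obtain d :: nat and p v where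
    vB: "\<forall>i<d. v i \<in> span B" and
    delta: "\<forall>i<d. \<forall>j<d. apply_bcontfun (v i) (p j) = (if i = j then 1 else 0)" and
    Bsub: "B \<subseteq> span (v ` {..<d})" using dual_basis[OF B(1)] by blast
  have sF: "subspace (\<F>m m)" by (rule A3_Fm(1))
  have vF: "\<forall>i<d. v i \<in> \<F>m m" using vB B by simp
  have "span B \<subseteq> span (v ` {..<d})" by (rule span_minimal[OF Bsub subspace_span])
  then have repr: "\<forall>x\<in>\<F>m m. x = (\<Sum>i<d. apply_bcontfun x (p i) *\<^sub>R v i)"
    using reproduce[OF delta] B by auto
  define P where "P = (\<lambda>f::'b \<Rightarrow>\<^sub>C real. \<Sum>i<d. apply_bcontfun f (p i) *\<^sub>R v i)"
  have Pbl: "bounded_linear P" unfolding P_def by (rule bl_finsum)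
  have PF: "\<forall>f. P f \<in> \<F>m m" unfolding P_def using vF by (auto intro!: subspace_sum[OF sF] subspace_scale[OF sF])
  have Pid: "\<forall>f\<in>\<F>m m. P f = f" unfolding P_def using repr by auto
  have Fm_eq: "\<F>m m = {f. P f = f}" using PF Pid by (metis (mono_tags, lifting) Collect_cong Collect_mem_eq)
  have clF: "closed (\<F>m m)"
    unfolding Fm_eq by (rule closed_Collect_eq) (auto intro: linear_continuous_on Pbl continuous_on_id)
  define D where "D = (\<lambda>n f la. (T n (pr n f) la - pr n f la) / \<epsilon> n)"
  have "\<forall>i\<in>{..<d}. \<exists>g. (\<forall>\<^sub>F n in sequentially. g n \<in> \<F>m m \<and> pr n (g n) = D n (v i)) \<and> g \<longlonglongrightarrow> A (v i)"
  proof
    fix i assume "i \<in> {..<d}"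
    then have "v i \<in> \<F>m m" using vF by simp
    from A4[OF this] show "\<exists>g. (\<forall>\<^sub>F n in sequentially. g n \<in> \<F>m m \<and> pr n (g n) = D n (v i)) \<and> g \<longlonglongrightarrow> A (v i)"
      by (simp add: D_def)
  qed
  from bchoice[OF this] obtain G where G: "\<forall>i\<in>{..<d}. (\<forall>\<^sub>F n in sequentially. G i n \<in> \<F>m m \<and> pr n (G i n) = D n (v i)) \<and> G i \<longlonglongrightarrow> A (v i)"
    by (elim exE)
  have AvF: "A (v i) \<in> \<F>m m" if "i < d" for i
  proof (rule Lim_in_closed_set[OF clF])
    show "\<forall>\<^sub>F n in sequentially. G i n \<in> \<F>m m" using G that by (auto elim: eventually_mono)
    show "G i \<longlonglongrightarrow> A (v i)" using G that by auto
  qed simp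
  define Ah where "Ah = mk (\<lambda>f. \<Sum>i<d. apply_bcontfun f (p i) *\<^sub>R A (v i))"
  define Bn where "Bn = (\<lambda>n. mk (\<lambda>f. \<Sum>i<d. apply_bcontfun f (p i) *\<^sub>R G i n))"
  have apAh: "ap Ah f = (\<Sum>i<d. apply_bcontfun f (p i) *\<^sub>R A (v i))" for f
    unfolding Ah_def by (subst ap_mk[OF bl_finsum]) simp
  have apBn: "ap (Bn n) f = (\<Sum>i<d. apply_bcontfun f (p i) *\<^sub>R G i n)" for n f
    unfolding Bn_def by (subst ap_mk[OF bl_finsum]) simp
  have AhF: "\<forall>f. ap Ah f \<in> \<F>m m" unfolding apAh using AvF
    by (auto intro!: subspace_sum[OF sF] subspace_scale[OF sF])
  have conv: "Bn \<longlonglongrightarrow> Ah"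
  proof (rule LIM_zero_cancel, rule Lim_null_comparison)
    show "\<forall>\<^sub>F n in sequentially. norm (Bn n - Ah) \<le> (\<Sum>i<d. norm (G i n - A (v i)))"
    proof (rule always_eventually, intro allI)
      fix n
      show "norm (Bn n - Ah) \<le> (\<Sum>i<d. norm (G i n - A (v i)))"
      proof (rule norm_bop_bound)
        show "0 \<le> (\<Sum>i<d. norm (G i n - A (v i)))" by (simp add: sum_nonneg)
        fix f
        have "ap (Bn n - Ah) f = (\<Sum>i<d. apply_bcontfun f (p i) *\<^sub>R (G i n - A (v i)))"
          unfolding ap_minus apAh apBn by (simp add: sum_subtractf scaleR_diff_right)
        also have "norm \<dots> \<le> norm f * (\<Sum>i<d. norm (G i n - A (v i)))" by (rule norm_finsum_le)
        finally show "norm (ap (Bn n - Ah) f) \<le> (\<Sum>i<d. norm (G i n - A (v i))) * norm f"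
          by (simp add: mult.commute)
      qed
    qed
    show "(\<lambda>n. \<Sum>i<d. norm (G i n - A (v i))) \<longlonglongrightarrow> 0"
      by (rule tendsto_null_sum) (use G in \<open>auto intro!: tendsto_norm_zero LIM_zero\<close>)
  qed
  have "\<forall>\<^sub>F n in sequentially. \<forall>i\<in>{..<d}. G i n \<in> \<F>m m \<and> pr n (G i n) = D n (v i)"
    by (rule eventually_ball_finite) (use G in auto)
  then obtain N where N: "\<And>n i. n \<ge> N \<Longrightarrow> i < d \<Longrightarrow> G i n \<in> \<F>m m \<and> pr n (G i n) = D n (v i)"
    unfolding eventually_sequentially by blast
  have BnF: "\<forall>n\<ge>N. \<forall>f\<in>\<F>m m. ap (Bn n) f \<in> \<F>m m \<and> pr n (ap (Bn n) f) = D n f"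
  proof (intro allI impI ballI conjI)
    fix n f assume n: "N \<le> n" and f: "f \<in> \<F>m m"
    show "ap (Bn n) f \<in> \<F>m m" unfolding apBn using N[OF n]
      by (auto intro!: subspace_sum[OF sF] subspace_scale[OF sF])
    show "pr n (ap (Bn n) f) = D n f"
    proof (rule ext)
      fix la
      have "pr n (ap (Bn n) f) la = (\<Sum>i<d. apply_bcontfun f (p i) * pr n (G i n) la)"
        unfolding apBn by (simp add: linear_sum[OF pr_linear] linear_scale[OF pr_linear])
      also have "\<dots> = (\<Sum>i<d. apply_bcontfun f (p i) * D n (v i) la)"
        using N[OF n] by simp
      also have "\<dots> = D n (\<Sum>i<d. apply_bcontfun f (p i) *\<^sub>R v i) la"
        unfolding D_def by (simp add: linear_sum[OF Dn_linear] linear_scale[OF Dn_linear])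
      also have "\<dots> = D n f la" using repr f by simp
      finally show "pr n (ap (Bn n) f) la = D n f la" .
    qed
  qed
  have Aeq: "\<forall>f\<in>\<F>m m. A f = ap Ah f"
  proof
    fix f assume f: "f \<in> \<F>m m"
    obtain g where g: "\<forall>\<^sub>F n in sequentially. g n \<in> \<F>m m \<and> pr n (g n) = D n f" "g \<longlonglongrightarrow> A f"
      using A4[OF f] unfolding D_def by blast
    obtain N0 where N0: "\<forall>n\<ge>N0. inj_on (pr n) (\<F>m m)" using A3_inj by blast
    have ev: "\<forall>\<^sub>F n in sequentially. g n = ap (Bn n) f"
    proof -
      have "\<forall>\<^sub>F n in sequentially. n \<ge> max N N0" by (rule eventually_ge_at_top)
      with g(1) show ?thesis
      proof eventually_elim
        case (elim n)
        then have nN: "N \<le> n" "N0 \<le> n" by auto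
        have inj: "inj_on (pr n) (\<F>m m)" using N0 nN by simp
        have m1: "g n \<in> \<F>m m" and e1: "pr n (g n) = D n f" using elim by auto
        have m2: "ap (Bn n) f \<in> \<F>m m" and e2: "pr n (ap (Bn n) f) = D n f" using BnF nN f by auto
        show "g n = ap (Bn n) f" using inj_onD[OF inj _ m1 m2] e1 e2 by simp
      qed
    qed
    have "(\<lambda>n. ap (Bn n) f) \<longlonglongrightarrow> ap Ah f"
      by (rule bounded_linear.tendsto[OF bounded_linear_ap_left conv])
    moreover have "(\<lambda>n. ap (Bn n) f) \<longlonglongrightarrow> A f"
      by (rule Lim_transform_eventually[OF g(2) ev])
    ultimately show "A f = ap Ah f" using LIMSEQ_unique by blast
  qed
  show ?thesis
    by (rule exI[of _ P], rule exI[of _ Ah], rule exI[of _ Bn], rule exI[of _ N])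
       (intro conjI Pbl PF Pid Aeq AhF conv BnF[unfolded D_def])
qed

end


context setting
begin

definition mdata where
  "mdata m P Ah Bn N \<longleftrightarrow> bounded_linear P \<and> (\<forall>f. P f \<in> \<F>m m) \<and> (\<forall>f\<in>\<F>m m. P f = f) \<and>
     (\<forall>f\<in>\<F>m m. A f = ap Ah f) \<and> (\<forall>f. ap Ah f \<in> \<F>m m) \<and>
     (\<forall>n\<ge>N. \<forall>f\<in>\<F>m m. ap (Bn n) f \<in> \<F>m m \<and>
          pr n (ap (Bn n) f) = (\<lambda>la. (T n (pr n f) la - pr n f la) / \<epsilon> n)) \<and>
     Bn \<longlonglongrightarrow> Ah"

lemma mdata_ex: "\<exists>P Ah Bn N. mdata m P Ah Bn N"
  unfolding mdata_def by (rule m_data)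

definition S0 :: "real \<Rightarrow> ('b \<Rightarrow>\<^sub>C real) \<Rightarrow> ('b \<Rightarrow>\<^sub>C real)" where
  "S0 t f = (\<Sum>k. (t^k / fact k) *\<^sub>R (A ^^ k) f)"

lemma Fm_closed: "closed (\<F>m m)"
proof -
  obtain P Ah Bn N where d: "mdata m P Ah Bn N" using mdata_ex by blast
  then have h: "\<forall>f. P f \<in> \<F>m m" "\<forall>f\<in>\<F>m m. P f = f" unfolding mdata_def by auto
  have "\<F>m m = {f. P f = f}"
  proof
    show "\<F>m m \<subseteq> {f. P f = f}" using h(2) by auto
    show "{f. P f = f} \<subseteq> \<F>m m"
    proof
      fix x assume "x \<in> {f. P f = f}"
      then have "x = P x" by simp
      with h(1) show "x \<in> \<F>m m" by metis
    qed
  qed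
  moreover have "continuous_on UNIV P" using d unfolding mdata_def by (auto intro: linear_continuous_on)
  ultimately show ?thesis by (simp add: closed_Collect_eq continuous_on_id)
qed

lemma Fm_sub: "subspace (\<F>m m)" by (rule A3_Fm(1))

lemma Fm_mono: "m \<le> m' \<Longrightarrow> \<F>m m \<subseteq> \<F>m m'"
  using lift_Suc_mono_le[of \<F>m, OF A3_Fm(3)] by blast

lemma F_Fm: "f \<in> \<F> \<Longrightarrow> \<exists>m. f \<in> \<F>m m"
  using A3_Fm(4) by blast

lemma Fm_F: "f \<in> \<F>m m \<Longrightarrow> f \<in> \<F>"
  using A3_Fm(4) by blast

lemma F_common: "f \<in> \<F> \<Longrightarrow> g \<in> \<F> \<Longrightarrow> \<exists>m. f \<in> \<F>m m \<and> g \<in> \<F>m m"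
proof -
  assume "f \<in> \<F>" "g \<in> \<F>"
  then obtain m1 m2 where "f \<in> \<F>m m1" "g \<in> \<F>m m2" using F_Fm by blast
  then show ?thesis using Fm_mono[of m1 "max m1 m2"] Fm_mono[of m2 "max m1 m2"] by auto
qed

lemma A_Fm: "f \<in> \<F>m m \<Longrightarrow> A f \<in> \<F>m m"
  using mdata_ex[of m] unfolding mdata_def by metis

lemma Ak_ap: "mdata m P Ah Bn N \<Longrightarrow> f \<in> \<F>m m \<Longrightarrow> (A ^^ k) f = ap (Ah ^ k) f \<and> (A ^^ k) f \<in> \<F>m m"
proof (induction k)
  case 0 then show ?case by simp
next
  case (Suc k)
  then have IH: "(A ^^ k) f = ap (Ah ^ k) f" "(A ^^ k) f \<in> \<F>m m" by auto
  have "(A ^^ Suc k) f = A ((A ^^ k) f)" by simp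
  also have "\<dots> = ap Ah ((A ^^ k) f)" using Suc.prems IH(2) unfolding mdata_def by auto
  also have "\<dots> = ap (Ah ^ Suc k) f" using IH(1) by (simp add: ap_times)
  finally show ?case using A_Fm[OF IH(2)] by simp
qed

lemma ap_exp_series:
  "(\<lambda>k. (t^k / fact k) *\<^sub>R ap (Ah ^ k) f) sums ap (exp (t *\<^sub>R Ah)) f"
proof -
  have s: "(\<lambda>k. (t *\<^sub>R Ah) ^ k /\<^sub>R fact k) sums exp (t *\<^sub>R Ah)"
    by (rule exp_converges)
  have "(\<lambda>k. ap ((t *\<^sub>R Ah) ^ k /\<^sub>R fact k) f) sums ap (exp (t *\<^sub>R Ah)) f"
    by (rule bounded_linear.sums[OF bounded_linear_ap_left s])
  moreover have "ap ((t *\<^sub>R Ah) ^ k /\<^sub>R fact k) f = (t^k / fact k) *\<^sub>R ap (Ah ^ k) f" for k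
    by (simp add: ap_scaleR scaleR_power divide_inverse mult.commute)
  ultimately show ?thesis by simp
qed

lemma S0_ap: "mdata m P Ah Bn N \<Longrightarrow> f \<in> \<F>m m \<Longrightarrow> S0 t f = ap (exp (t *\<^sub>R Ah)) f"
proof -
  assume d: "mdata m P Ah Bn N" and f: "f \<in> \<F>m m"
  have "(\<lambda>k. (t^k / fact k) *\<^sub>R (A ^^ k) f) sums ap (exp (t *\<^sub>R Ah)) f"
    using ap_exp_series[of t Ah f] Ak_ap[OF d f] by simp
  then show ?thesis unfolding S0_def by (rule sums_unique[symmetric])
qed

lemma S0_Fm: "f \<in> \<F>m m \<Longrightarrow> S0 t f \<in> \<F>m m"
proof -
  assume f: "f \<in> \<F>m m"
  obtain P Ah Bn N where d: "mdata m P Ah Bn N" using mdata_ex by blast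
  have s: "(\<lambda>k. (t^k / fact k) *\<^sub>R (A ^^ k) f) sums S0 t f"
    using ap_exp_series[of t Ah f] Ak_ap[OF d f] S0_ap[OF d f] by simp
  show ?thesis
  proof (rule Lim_in_closed_set[OF Fm_closed])
    show "(\<lambda>n. \<Sum>k<n. (t^k / fact k) *\<^sub>R (A ^^ k) f) \<longlonglongrightarrow> S0 t f" using s unfolding sums_def .
    show "\<forall>\<^sub>F n in sequentially. (\<Sum>k<n. (t^k / fact k) *\<^sub>R (A ^^ k) f) \<in> \<F>m m"
    proof -
      have Akf: "\<forall>k. (A ^^ k) f \<in> \<F>m m" using Ak_ap[OF d f] by blast
      show ?thesis by (rule always_eventually, intro allI subspace_sum[OF Fm_sub] subspace_scale[OF Fm_sub]) (use Akf in blast)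
    qed
  qed simp
qed

lemma S0_F: "f \<in> \<F> \<Longrightarrow> S0 t f \<in> \<F>"
  using F_Fm S0_Fm Fm_F by blast

lemma A_zero: "A 0 = 0"
proof -
  obtain P Ah Bn N where d: "mdata 0 P Ah Bn N" using mdata_ex by blast
  have "0 \<in> \<F>m 0" using Fm_sub by (rule subspace_0)
  then show ?thesis using d unfolding mdata_def by auto
qed

lemma S0_lin: "f \<in> \<F> \<Longrightarrow> g \<in> \<F> \<Longrightarrow> S0 t (f + c *\<^sub>R g) = S0 t f + c *\<^sub>R S0 t g"
proof -
  assume "f \<in> \<F>" "g \<in> \<F>"
  then obtain m where fg: "f \<in> \<F>m m" "g \<in> \<F>m m" using F_common by blast
  obtain P Ah Bn N where d: "mdata m P Ah Bn N" using mdata_ex by blast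
  have "f + c *\<^sub>R g \<in> \<F>m m" using fg by (intro subspace_add[OF Fm_sub] subspace_scale[OF Fm_sub])
  then show ?thesis using S0_ap[OF d] fg by (simp add: ap_add2 ap_scale2)
qed

lemma S0_diff: "f \<in> \<F> \<Longrightarrow> g \<in> \<F> \<Longrightarrow> S0 t (f - g) = S0 t f - S0 t g"
  using S0_lin[of f g t "-1"] by simp

lemma S0_zero_time: "f \<in> \<F> \<Longrightarrow> S0 0 f = f"
proof -
  assume "f \<in> \<F>"
  then obtain m where f: "f \<in> \<F>m m" using F_Fm by blast
  obtain P Ah Bn N where d: "mdata m P Ah Bn N" using mdata_ex by blast
  show ?thesis using S0_ap[OF d f] by simp
qed

lemma S0_add_time: "f \<in> \<F> \<Longrightarrow> S0 (s + t) f = S0 s (S0 t f)"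
proof -
  assume "f \<in> \<F>"
  then obtain m where f: "f \<in> \<F>m m" using F_Fm by blast
  obtain P Ah Bn N where d: "mdata m P Ah Bn N" using mdata_ex by blast
  have "S0 (s + t) f = ap (exp (s *\<^sub>R Ah) * exp (t *\<^sub>R Ah)) f"
    using S0_ap[OF d f] by (simp add: exp_scaleR_add)
  also have "\<dots> = S0 s (S0 t f)"
    using S0_ap[OF d f] S0_ap[OF d S0_Fm[OF f]] by (simp add: ap_times)
  finally show ?thesis .
qed

lemma A_one: "A (const_bcontfun 1) = 0"
proof -
  obtain m where one: "const_bcontfun 1 \<in> \<F>m m" using F_Fm A5 by blast
  obtain P Ah Bn N where d: "mdata m P Ah Bn N" using mdata_ex by blast
  obtain N0 where N0: "\<forall>n\<ge>N0. inj_on (pr n) (\<F>m m)" using A3_inj by blast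
  have D0: "(\<lambda>la. (T n (pr n (const_bcontfun 1)) la - pr n (const_bcontfun 1) la) / \<epsilon> n) = pr n 0" for n
  proof (rule ext)
    fix la
    show "(T n (pr n (const_bcontfun 1)) la - pr n (const_bcontfun 1) la) / \<epsilon> n = pr n 0 la"
    proof (cases "la \<in> L n")
      case True
      then show ?thesis unfolding pr_const using T_const[OF True] by (simp add: proj_def L_iff)
    next
      case False
      then show ?thesis unfolding pr_const using T_out[OF False] by (simp add: proj_def L_iff)
    qed
  qed
  have ev: "\<forall>\<^sub>F n in sequentially. ap (Bn n) (const_bcontfun 1) = 0"
  proof -
    have "\<forall>\<^sub>F n in sequentially. n \<ge> max N N0" by (rule eventually_ge_at_top)
    then show ?thesis
    proof (rule eventually_mono)
      fix n assume n: "max N N0 \<le> n"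
      have inj: "inj_on (pr n) (\<F>m m)" using N0 n by simp
      have m1: "ap (Bn n) (const_bcontfun 1) \<in> \<F>m m"
        and e1: "pr n (ap (Bn n) (const_bcontfun 1)) = pr n 0"
        using d one n D0 unfolding mdata_def by auto
      show "ap (Bn n) (const_bcontfun 1) = 0"
        using inj_onD[OF inj e1 m1 subspace_0[OF Fm_sub]] .
    qed
  qed
  have "(\<lambda>n. ap (Bn n) (const_bcontfun 1)) \<longlonglongrightarrow> ap Ah (const_bcontfun 1)"
    using d unfolding mdata_def by (auto intro: bounded_linear.tendsto[OF bounded_linear_ap_left])
  moreover have "(\<lambda>n. ap (Bn n) (const_bcontfun 1)) \<longlonglongrightarrow> 0"
    by (rule Lim_transform_eventually[OF tendsto_const]) (use ev in \<open>auto elim: eventually_mono\<close>)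
  ultimately have "ap Ah (const_bcontfun 1) = 0" using LIMSEQ_unique by blast
  then show ?thesis using d one unfolding mdata_def by auto
qed

lemma S0_one: "S0 t (const_bcontfun 1) = const_bcontfun 1"
proof -
  have Ak: "(A ^^ k) (const_bcontfun 1) = (if k = 0 then const_bcontfun 1 else 0)" for k
  proof (induction k)
    case 0 then show ?case by simp
  next
    case (Suc k)
    have z: "(A ^^ j) 0 = 0" for j by (induction j) (auto simp: A_zero)
    have "(A ^^ Suc k) (const_bcontfun 1) = (A ^^ k) (A (const_bcontfun 1))" by (simp add: funpow_Suc_right del: funpow.simps)
    then show ?case by (simp add: A_one z del: funpow.simps)
  qed
  have "(\<lambda>k. (t^k / fact k) *\<^sub>R (A ^^ k) (const_bcontfun 1)) = (\<lambda>k. if k = 0 then const_bcontfun 1 else 0)"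
    by (rule ext) (simp add: Ak)
  moreover have "(\<lambda>k. if k = 0 then const_bcontfun 1 else (0::'b \<Rightarrow>\<^sub>C real)) sums const_bcontfun 1"
    using sums_single[of 0 "\<lambda>_. const_bcontfun 1 :: 'b \<Rightarrow>\<^sub>C real"] by simp
  ultimately show ?thesis unfolding S0_def by (simp add: sums_iff)
qed

end


context setting
begin

lemma iter:
  assumes d: "mdata m P Ah Bn N" and n: "N \<le> n" and f: "f \<in> \<F>m m"
  shows "(T n ^^ k) (pr n f) = pr n (ap ((1 + \<epsilon> n *\<^sub>R Bn n)^k) f) \<and> ap ((1 + \<epsilon> n *\<^sub>R Bn n)^k) f \<in> \<F>m m"
proof (induction k)
  case 0 then show ?case using f by simp
next
  case (Suc k)
  define y where "y = ap ((1 + \<epsilon> n *\<^sub>R Bn n)^k) f"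
  have IH: "(T n ^^ k) (pr n f) = pr n y" "y \<in> \<F>m m" using Suc unfolding y_def by auto
  have By: "ap (Bn n) y \<in> \<F>m m" "pr n (ap (Bn n) y) = (\<lambda>la. (T n (pr n y) la - pr n y la) / \<epsilon> n)"
    using d n IH(2) unfolding mdata_def by auto
  have eq: "ap ((1 + \<epsilon> n *\<^sub>R Bn n)^Suc k) f = y + \<epsilon> n *\<^sub>R ap (Bn n) y"
    unfolding y_def by (simp add: ap_times ap_plus ap_scaleR)
  have "pr n (y + \<epsilon> n *\<^sub>R ap (Bn n) y) = (\<lambda>la. pr n y la + \<epsilon> n * pr n (ap (Bn n) y) la)"
    by (rule pr_lin)
  also have "\<dots> = T n (pr n y)" unfolding By(2) using A4_eps(1)[of n] by (simp add: field_simps)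
  finally have "pr n (ap ((1 + \<epsilon> n *\<^sub>R Bn n)^Suc k) f) = (T n ^^ Suc k) (pr n f)"
    unfolding eq using IH(1) by simp
  moreover have "ap ((1 + \<epsilon> n *\<^sub>R Bn n)^Suc k) f \<in> \<F>m m"
    unfolding eq using IH(2) By(1) by (intro subspace_add[OF Fm_sub] subspace_scale[OF Fm_sub])
  ultimately show ?case by simp
qed

lemma approx_F:
  assumes f: "f \<in> \<F>m m" and e: "e > 0"
  shows "\<exists>N. \<forall>n\<ge>N. \<forall>t\<in>{0..R}. \<forall>la\<in>L n.
           \<bar>(T n ^^ nat \<lfloor>t / \<epsilon> n\<rfloor>) (pr n f) la - pr n (S0 t f) la\<bar> < e"
proof -
  obtain P Ah Bn N where d: "mdata m P Ah Bn N" using mdata_ex by blast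
  have conv: "Bn \<longlonglongrightarrow> Ah" using d unfolding mdata_def by blast
  define e' where "e' = e / (norm f + 1)"
  have e': "e' > 0" unfolding e'_def by (intro divide_pos_pos e add_nonneg_pos) auto
  obtain N1 where N1: "\<forall>n\<ge>N1. \<forall>t\<in>{0..R}. norm ((1 + \<epsilon> n *\<^sub>R Bn n)^(nat \<lfloor>t / \<epsilon> n\<rfloor>) - exp (t *\<^sub>R Ah)) < e'"
    using exp_approx[OF conv A4_eps(2) A4_eps(1) e'] by blast
  have "\<forall>n\<ge>max N N1. \<forall>t\<in>{0..R}. \<forall>la\<in>L n.
           \<bar>(T n ^^ nat \<lfloor>t / \<epsilon> n\<rfloor>) (pr n f) la - pr n (S0 t f) la\<bar> < e"
  proof (intro allI impI ballI)
    fix n t la assume n: "max N N1 \<le> n" and t: "t \<in> {0..R}" and la: "la \<in> L n"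
    define X where "X = (1 + \<epsilon> n *\<^sub>R Bn n)^(nat \<lfloor>t / \<epsilon> n\<rfloor>) - exp (t *\<^sub>R Ah)"
    have "(T n ^^ nat \<lfloor>t / \<epsilon> n\<rfloor>) (pr n f) la - pr n (S0 t f) la = pr n (ap X f) la"
      using iter[OF d _ f, of n "nat \<lfloor>t / \<epsilon> n\<rfloor>"] n S0_ap[OF d f]
      unfolding X_def by (simp add: ap_minus pr_diff)
    also have "\<bar>\<dots>\<bar> \<le> norm (ap X f)" by (rule pr_bound)
    also have "\<dots> \<le> norm X * norm f" by (rule ap_norm)
    also have "\<dots> \<le> e' * norm f" using N1 n t unfolding X_def by (intro mult_right_mono) (auto intro: less_imp_le)
    also have "\<dots> < e' * (norm f + 1)" using e' by (intro mult_strict_left_mono) auto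
    also have "\<dots> = e" unfolding e'_def using add_nonneg_pos[OF norm_ge_zero[of f] zero_less_one] by simp
    finally show "\<bar>(T n ^^ nat \<lfloor>t / \<epsilon> n\<rfloor>) (pr n f) la - pr n (S0 t f) la\<bar> < e" .
  qed
  then show ?thesis by blast
qed

lemma S0_contr: "f \<in> \<F> \<Longrightarrow> 0 \<le> t \<Longrightarrow> norm (S0 t f) \<le> norm f"
proof -
  assume "f \<in> \<F>" and t: "0 \<le> t"
  then obtain m where f: "f \<in> \<F>m m" using F_Fm by blast
  show ?thesis
  proof (rule norm_from_levels)
    fix \<delta> :: real assume d: "\<delta> > 0"
    obtain N where N: "\<forall>n\<ge>N. \<forall>t'\<in>{0..t}. \<forall>la\<in>L n.
           \<bar>(T n ^^ nat \<lfloor>t' / \<epsilon> n\<rfloor>) (pr n f) la - pr n (S0 t' f) la\<bar> < \<delta>"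
      using approx_F[OF f d] by blast
    show "\<forall>\<^sub>F n in sequentially. \<forall>la\<in>L n. \<bar>apply_bcontfun (S0 t f) (\<iota> n la)\<bar> \<le> norm f + \<delta>"
      unfolding eventually_sequentially
    proof (intro exI[of _ N] allI impI ballI)
      fix n la assume n: "N \<le> n" and la: "la \<in> L n"
      have b: "\<bar>(T n ^^ nat \<lfloor>t / \<epsilon> n\<rfloor>) (pr n f) la\<bar> \<le> norm f"
        using Tk_bound[of n "pr n f" "norm f"] pr_bound la by blast
      have "\<bar>(T n ^^ nat \<lfloor>t / \<epsilon> n\<rfloor>) (pr n f) la - pr n (S0 t f) la\<bar> < \<delta>" using N n la t by auto
      with b show "\<bar>apply_bcontfun (S0 t f) (\<iota> n la)\<bar> \<le> norm f + \<delta>"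
        using pr_eval[OF la, of "S0 t f"] by linarith
    qed
  qed
qed

lemma S0_pos: "f \<in> \<F> \<Longrightarrow> 0 \<le> t \<Longrightarrow> (\<forall>x. 0 \<le> apply_bcontfun f x) \<Longrightarrow> 0 \<le> apply_bcontfun (S0 t f) x"
proof -
  assume "f \<in> \<F>" and t: "0 \<le> t" and pos: "\<forall>x. 0 \<le> apply_bcontfun f x"
  then obtain m where f: "f \<in> \<F>m m" using F_Fm by blast
  show ?thesis
  proof (rule nonneg_from_levels)
    fix \<delta> :: real assume d: "\<delta> > 0"
    obtain N where N: "\<forall>n\<ge>N. \<forall>t'\<in>{0..t}. \<forall>la\<in>L n.
           \<bar>(T n ^^ nat \<lfloor>t' / \<epsilon> n\<rfloor>) (pr n f) la - pr n (S0 t' f) la\<bar> < \<delta>"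
      using approx_F[OF f d] by blast
    show "\<forall>\<^sub>F n in sequentially. \<forall>la\<in>L n. - \<delta> \<le> apply_bcontfun (S0 t f) (\<iota> n la)"
      unfolding eventually_sequentially
    proof (intro exI[of _ N] allI impI ballI)
      fix n la assume n: "N \<le> n" and la: "la \<in> L n"
      have "\<forall>la\<in>L n. 0 \<le> pr n f la" using pos by (simp add: pr_eval)
      then have b: "0 \<le> (T n ^^ nat \<lfloor>t / \<epsilon> n\<rfloor>) (pr n f) la"
        using Tk_nonneg la by blast
      have "\<bar>(T n ^^ nat \<lfloor>t / \<epsilon> n\<rfloor>) (pr n f) la - pr n (S0 t f) la\<bar> < \<delta>" using N n la t by auto
      with b show "- \<delta> \<le> apply_bcontfun (S0 t f) (\<iota> n la)"
        using pr_eval[OF la, of "S0 t f"] by linarith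
    qed
  qed
qed

lemma S0_eq_fun: "mdata m P Ah Bn N \<Longrightarrow> f \<in> \<F>m m \<Longrightarrow> (\<lambda>s. S0 s f) = (\<lambda>s. ap (exp (s *\<^sub>R Ah)) f)"
  using S0_ap by blast

lemma S0_cont: "f \<in> \<F> \<Longrightarrow> continuous_on UNIV (\<lambda>s. S0 s f)"
proof -
  assume "f \<in> \<F>"
  then obtain m where f: "f \<in> \<F>m m" using F_Fm by blast
  obtain P Ah Bn N where d: "mdata m P Ah Bn N" using mdata_ex by blast
  show ?thesis unfolding S0_eq_fun[OF d f]
    by (intro bounded_linear.continuous_on[OF bounded_linear_ap_left] continuous_on_vector_derivative)
       (rule exp_scaleR_has_vector_derivative_right)
qed

lemma S0_deriv: "f \<in> \<F> \<Longrightarrow> ((\<lambda>s. S0 s f) has_vector_derivative S0 s (A f)) (at s within X)"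
proof -
  assume "f \<in> \<F>"
  then obtain m where f: "f \<in> \<F>m m" using F_Fm by blast
  obtain P Ah Bn N where d: "mdata m P Ah Bn N" using mdata_ex by blast
  have Af: "A f = ap Ah f" "A f \<in> \<F>m m" using d f A_Fm unfolding mdata_def by auto
  have "((\<lambda>s. ap (exp (s *\<^sub>R Ah)) f) has_vector_derivative ap (exp (s *\<^sub>R Ah) * Ah) f) (at s within X)"
    by (rule bounded_linear.has_vector_derivative[OF bounded_linear_ap_left exp_scaleR_has_vector_derivative_right])
  moreover have "ap (exp (s *\<^sub>R Ah) * Ah) f = S0 s (A f)"
    using S0_ap[OF d Af(2)] Af(1) by (simp add: ap_times)
  ultimately show ?thesis unfolding S0_eq_fun[OF d f] by simp
qed

lemma S0_comm: "f \<in> \<F> \<Longrightarrow> A (S0 s f) = S0 s (A f)"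
proof -
  assume "f \<in> \<F>"
  then obtain m where f: "f \<in> \<F>m m" using F_Fm by blast
  obtain P Ah Bn N where d: "mdata m P Ah Bn N" using mdata_ex by blast
  have Af: "A f = ap Ah f" "A f \<in> \<F>m m" using d f A_Fm unfolding mdata_def by auto
  have "A (S0 s f) = ap Ah (ap (exp (s *\<^sub>R Ah)) f)"
    using d S0_Fm[OF f] S0_ap[OF d f] unfolding mdata_def by auto
  also have "\<dots> = ap (exp (s *\<^sub>R Ah)) (ap Ah f)"
    by (simp add: ap_times[symmetric] exp_times_scaleR_commute)
  also have "\<dots> = S0 s (A f)" using S0_ap[OF d Af(2)] Af(1) by simp
  finally show ?thesis .
qed

end


context setting
begin

lemma dense_closed: "closed C \<Longrightarrow> \<F> \<subseteq> C \<Longrightarrow> x \<in> C"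
  using closure_minimal[of \<F> C] A3_F(2) by auto

lemma dense_eq:
  fixes hA hB :: "('b \<Rightarrow>\<^sub>C real) \<Rightarrow> ('b \<Rightarrow>\<^sub>C real)"
  assumes "continuous_on UNIV hA" "continuous_on UNIV hB" "\<And>f. f \<in> \<F> \<Longrightarrow> hA f = hB f"
  shows "hA x = hB x"
proof -
  have "x \<in> {x. hA x = hB x}"
    by (rule dense_closed[OF closed_Collect_eq[OF assms(1,2)]]) (use assms(3) in auto)
  then show ?thesis by simp
qed

lemma S0_unif: "0 \<le> t \<Longrightarrow> uniformly_continuous_on \<F> (S0 t)"
  unfolding uniformly_continuous_on_def
proof (intro allI impI)
  fix e :: real assume "t \<ge> 0" "e > 0"
  show "\<exists>d>0. \<forall>x\<in>\<F>. \<forall>x'\<in>\<F>. dist x' x < d \<longrightarrow> dist (S0 t x') (S0 t x) < e"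
  proof (intro exI[of _ e] conjI ballI impI)
    fix x x' assume x: "x \<in> \<F>" "x' \<in> \<F>" and d: "dist x' x < e"
    have "dist (S0 t x') (S0 t x) = norm (S0 t (x' - x))"
      using S0_diff[OF x(2) x(1)] by (simp add: dist_norm)
    also have "\<dots> \<le> norm (x' - x)"
      using S0_contr[OF _ \<open>t \<ge> 0\<close>] x subspace_diff[OF A3_F(1)] by blast
    finally show "dist (S0 t x') (S0 t x) < e" using d by (simp add: dist_norm)
  qed (use \<open>e > 0\<close> in simp)
qed

lemma S_ex: "0 \<le> t \<Longrightarrow> \<exists>h. continuous_on UNIV h \<and> (\<forall>f\<in>\<F>. h f = S0 t f)"
proof -
  assume t: "0 \<le> t"
  obtain g where g: "uniformly_continuous_on (closure \<F>) g" "\<And>x. x \<in> \<F> \<Longrightarrow> S0 t x = g x"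
    using uniformly_continuous_on_extension_on_closure[OF S0_unif[OF t]] by metis
  show ?thesis
    using g A3_F(2) by (intro exI[of _ g]) (auto intro: uniformly_continuous_imp_continuous)
qed

definition S :: "real \<Rightarrow> ('b \<Rightarrow>\<^sub>C real) \<Rightarrow> ('b \<Rightarrow>\<^sub>C real)" where
  "S t = (if 0 \<le> t then (SOME h. continuous_on UNIV h \<and> (\<forall>f\<in>\<F>. h f = S0 t f)) else id)"

lemma S_char: "0 \<le> t \<Longrightarrow> continuous_on UNIV (S t) \<and> (\<forall>f\<in>\<F>. S t f = S0 t f)"
  unfolding S_def using someI_ex[OF S_ex] by simp

lemma S_cont: "0 \<le> t \<Longrightarrow> continuous_on UNIV (S t)" using S_char by blast
lemma S_agree: "0 \<le> t \<Longrightarrow> f \<in> \<F> \<Longrightarrow> S t f = S0 t f" using S_char by blast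

lemma S_add: "0 \<le> t \<Longrightarrow> S t (f + g) = S t f + S t g"
proof -
  assume t: "0 \<le> t"
  have cS: "continuous_on UNIV (S t)" by (rule S_cont[OF t])
  have step: "S t (f + g) = S t f + S t g" if g: "g \<in> \<F>" for f g
  proof (rule dense_eq[where hA = "\<lambda>f. S t (f + g)" and hB = "\<lambda>f. S t f + S t g"])
    show "continuous_on UNIV (\<lambda>f. S t (f + g))"
      by (rule continuous_on_compose2[OF cS]) (auto intro: continuous_intros)
    show "continuous_on UNIV (\<lambda>f. S t f + S t g)" using cS by (auto intro: continuous_intros)
    fix f assume f: "f \<in> \<F>"
    then show "S t (f + g) = S t f + S t g"
      using S_agree[OF t] S0_lin[OF f g, of t 1] g subspace_add[OF A3_F(1) f g] by simp
  qed
  show ?thesis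
  proof (rule dense_eq[where hA = "\<lambda>g. S t (f + g)" and hB = "\<lambda>g. S t f + S t g"])
    show "continuous_on UNIV (\<lambda>g. S t (f + g))"
      by (rule continuous_on_compose2[OF cS]) (auto intro: continuous_intros)
    show "continuous_on UNIV (\<lambda>g. S t f + S t g)" using cS by (auto intro: continuous_intros)
  qed (rule step)
qed

lemma S_scale: "0 \<le> t \<Longrightarrow> S t (c *\<^sub>R f) = c *\<^sub>R S t f"
proof -
  assume t: "0 \<le> t"
  have cS: "continuous_on UNIV (S t)" by (rule S_cont[OF t])
  show ?thesis
  proof (rule dense_eq[where hA = "\<lambda>f. S t (c *\<^sub>R f)" and hB = "\<lambda>f. c *\<^sub>R S t f"])
    show "continuous_on UNIV (\<lambda>f. S t (c *\<^sub>R f))"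
      by (rule continuous_on_compose2[OF cS]) (auto intro: continuous_intros)
    show "continuous_on UNIV (\<lambda>f. c *\<^sub>R S t f)" using cS by (auto intro: continuous_intros)
    fix f assume f: "f \<in> \<F>"
    have z: "0 \<in> \<F>" by (rule subspace_0[OF A3_F(1)])
    have "S0 t (0 + c *\<^sub>R f) = S0 t 0 + c *\<^sub>R S0 t f" by (rule S0_lin[OF z f])
    moreover have "S0 t 0 = 0" using S0_lin[OF z z, of t 1] by simp
    ultimately show "S t (c *\<^sub>R f) = c *\<^sub>R S t f"
      using S_agree[OF t] f subspace_scale[OF A3_F(1) f] by simp
  qed
qed

lemma S_diff: "0 \<le> t \<Longrightarrow> S t (f - g) = S t f - S t g"
  using S_add[of t f "- g"] S_scale[of t "-1" g] by simp

lemma S_contr: "0 \<le> t \<Longrightarrow> norm (S t f) \<le> norm f"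
proof -
  assume t: "0 \<le> t"
  have "f \<in> {f. norm (S t f) \<le> norm f}"
  proof (rule dense_closed)
    show "closed {f. norm (S t f) \<le> norm f}"
      by (rule closed_Collect_le)
         (auto intro: continuous_on_norm continuous_on_id S_cont[OF t])
    show "\<F> \<subseteq> {f. norm (S t f) \<le> norm f}" using S_agree[OF t] S0_contr[OF _ t] by auto
  qed
  then show ?thesis by simp
qed

lemma S_bl: "0 \<le> t \<Longrightarrow> bounded_linear (S t)"
  by (rule bounded_linear_intro[where K = 1]) (auto simp: S_add S_scale S_contr)

lemma S_zero: "S 0 f = f"
  by (rule dense_eq[where hA = "S 0" and hB = "\<lambda>f. f"]) (auto simp: S_cont S_agree S0_zero_time continuous_on_id)

lemma S_semi: "0 \<le> s \<Longrightarrow> 0 \<le> t \<Longrightarrow> S (s + t) f = S s (S t f)"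
proof -
  assume s: "0 \<le> s" and t: "0 \<le> t"
  show ?thesis
  proof (rule dense_eq[where hA = "S (s + t)" and hB = "\<lambda>f. S s (S t f)"])
    show "continuous_on UNIV (S (s + t))" using s t by (intro S_cont) simp
    show "continuous_on UNIV (\<lambda>f. S s (S t f))"
      by (rule continuous_on_compose2[OF S_cont[OF s] S_cont[OF t]]) simp
    fix f assume f: "f \<in> \<F>"
    then show "S (s + t) f = S s (S t f)"
      using S_agree[OF t f] S_agree[OF s S0_F[OF f]] S_agree[of "s + t" f] s t S0_add_time[OF f]
      by simp
  qed
qed

lemma S_one: "0 \<le> t \<Longrightarrow> S t (const_bcontfun 1) = const_bcontfun 1"
  using S_agree[OF _ A5] S0_one by simp

lemma S_pos:
  assumes t: "0 \<le> t" and pos: "\<forall>x. 0 \<le> apply_bcontfun f x"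
  shows "0 \<le> apply_bcontfun (S t f) x"
proof -
  have "f \<in> closure \<F>" using A3_F(2) by simp
  then obtain u where u: "\<And>j. u j \<in> \<F>" "u \<longlonglongrightarrow> f" unfolding closure_sequential by blast
  define y where "y = (\<lambda>j. u j + norm (u j - f) *\<^sub>R const_bcontfun 1)"
  have yF: "y j \<in> \<F>" for j
    unfolding y_def using u(1) A5 by (intro subspace_add[OF A3_F(1)] subspace_scale[OF A3_F(1)])
  have ypos: "0 \<le> apply_bcontfun (y j) z" for j z
  proof -
    have "\<bar>apply_bcontfun (u j - f) z\<bar> \<le> norm (u j - f)" using norm_bounded[of "u j - f" z] by simp
    then show ?thesis unfolding y_def using pos[rule_format, of z] by simp
  qed
  have "(\<lambda>j. norm (u j - f)) \<longlonglongrightarrow> 0" using u(2) by (intro tendsto_norm_zero LIM_zero)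
  then have "(\<lambda>j. norm (u j - f) *\<^sub>R const_bcontfun 1) \<longlonglongrightarrow> 0 *\<^sub>R (const_bcontfun 1 :: 'b \<Rightarrow>\<^sub>C real)"
    by (intro tendsto_scaleR tendsto_const)
  then have yconv: "y \<longlonglongrightarrow> f" unfolding y_def using tendsto_add[OF u(2)] by fastforce
  have "isCont (S t) f" using S_cont[OF t] continuous_on_eq_continuous_at[of UNIV] by auto
  then have "(\<lambda>j. S t (y j)) \<longlonglongrightarrow> S t f" by (rule isCont_tendsto_compose[OF _ yconv])
  then have lim: "(\<lambda>j. apply_bcontfun (S t (y j)) x) \<longlonglongrightarrow> apply_bcontfun (S t f) x"
    by (rule bounded_linear.tendsto[OF eval_bl])
  show ?thesis
  proof (rule LIMSEQ_le_const[OF lim], intro exI allI impI)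
    fix j
    show "0 \<le> apply_bcontfun (S t (y j)) x"
      using S_agree[OF t yF] S0_pos[OF yF t] ypos by auto
  qed
qed

lemma norm3: "norm (a + b + c) \<le> norm a + norm b + norm (c::'a::real_normed_vector)"
  using norm_triangle_ineq[of "a+b" c] norm_triangle_ineq[of a b] by linarith

lemma S_strong: "continuous_on {0..} (\<lambda>t. S t f)"
  unfolding continuous_on_iff
proof (intro ballI allI impI)
  fix t0 :: real and e :: real assume t0: "t0 \<in> {0..}" and e: "0 < e"
  have e3: "e / 3 > 0" using e by simp
  have "f \<in> closure \<F>" using A3_F(2) by simp
  then have "\<forall>\<epsilon>>0. \<exists>y\<in>\<F>. dist y f < \<epsilon>" unfolding closure_approachable .
  then obtain u where u: "u \<in> \<F>" "dist u f < e / 3" using e3 by blast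
  have "continuous_on UNIV (\<lambda>s. S0 s u)" by (rule S0_cont[OF u(1)])
  then have "\<forall>\<epsilon>>0. \<exists>\<delta>>0. \<forall>s\<in>UNIV. dist s t0 < \<delta> \<longrightarrow> dist (S0 s u) (S0 t0 u) < \<epsilon>"
    unfolding continuous_on_iff by blast
  then obtain d where d: "d > 0" "\<forall>s\<in>UNIV. dist s t0 < d \<longrightarrow> dist (S0 s u) (S0 t0 u) < e / 3"
    using e3 by blast
  show "\<exists>d>0. \<forall>t\<in>{0..}. dist t t0 < d \<longrightarrow> dist (S t f) (S t0 f) < e"
  proof (intro exI[of _ d] conjI ballI impI)
    show "d > 0" by (rule d(1))
    fix t assume t: "t \<in> {0..}" and dt: "dist t t0 < d"
    have t': "0 \<le> t" "0 \<le> t0" using t t0 by auto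
    have eq: "S t f - S t0 f = (S t f - S t u) + (S t u - S t0 u) + (S t0 u - S t0 f)" by simp
    have a: "norm (S t f - S t u) \<le> norm (f - u)"
      using S_contr[OF t'(1), of "f - u"] S_diff[OF t'(1), of f u] by simp
    have c: "norm (S t0 u - S t0 f) \<le> norm (u - f)"
      using S_contr[OF t'(2), of "u - f"] S_diff[OF t'(2), of u f] by simp
    have b: "norm (S t u - S t0 u) < e / 3"
      using d(2) dt S_agree[OF t'(1) u(1)] S_agree[OF t'(2) u(1)] by (simp add: dist_norm)
    have "dist (S t f) (S t0 f) \<le> norm (S t f - S t u) + norm (S t u - S t0 u) + norm (S t0 u - S t0 f)"
      unfolding dist_norm eq by (rule norm3)
    also have "\<dots> < e" using a b c u(2) by (simp add: dist_norm norm_minus_commute)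
    finally show "dist (S t f) (S t0 f) < e" .
  qed
qed

end


lemma int_norm_le:
  fixes u :: "real \<Rightarrow> 'a::real_normed_vector"
  assumes "(u has_integral I) {0..t}" "0 \<le> t" "\<And>s. s \<in> {0..t} \<Longrightarrow> norm (u s) \<le> B" "0 \<le> B"
  shows "norm I \<le> B * t"
  using has_integral_bound[of B u I 0 t] assms by (simp add: cbox_interval content_real)

lemma avg_lim:
  fixes u :: "real \<Rightarrow> 'a::banach"
  assumes cu: "continuous_on {0..} u"
  shows "((\<lambda>h. (1/h) *\<^sub>R integral {0..h} u) \<longlongrightarrow> u 0) (at_right 0)"
  unfolding tendsto_iff
proof (intro allI impI)
  fix e :: real assume e: "e > 0"
  have "\<forall>x\<in>{0..}. \<forall>\<epsilon>>0. \<exists>\<delta>>0. \<forall>x'\<in>{0..}. dist x' x < \<delta> \<longrightarrow> dist (u x') (u x) < \<epsilon>"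
    using cu unfolding continuous_on_iff .
  moreover have "(0::real) \<in> {0..}" by simp
  ultimately have "\<forall>\<epsilon>>0. \<exists>\<delta>>0. \<forall>x'\<in>{0..}. dist x' 0 < \<delta> \<longrightarrow> dist (u x') (u 0) < \<epsilon>"
    by (rule bspec)
  moreover have "e / 2 > 0" using e by simp
  ultimately obtain \<delta> where d: "\<delta> > 0" "\<forall>x'\<in>{0..}. dist x' 0 < \<delta> \<longrightarrow> dist (u x') (u 0) < e / 2"
    by blast
  show "\<forall>\<^sub>F h in at_right 0. dist ((1/h) *\<^sub>R integral {0..h} u) (u 0) < e"
    unfolding eventually_at_right[OF zero_less_one]
  proof (intro exI[of _ "min \<delta> 1"] conjI allI impI)
    show "0 < min \<delta> 1" using d by simp
    fix h :: real assume h: "0 < h" "h < min \<delta> 1"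
    have ch: "continuous_on {0..h} u" by (rule continuous_on_subset[OF cu]) auto
    have int: "(u has_integral integral {0..h} u) {0..h}"
      using integrable_continuous_real[OF ch] by (simp add: has_integral_integral)
    have c: "((\<lambda>s. u 0) has_integral h *\<^sub>R u 0) {0..h}"
      using has_integral_const_real[of "u 0" 0 h] h by (simp add: content_real)
    have diff: "((\<lambda>s. u s - u 0) has_integral (integral {0..h} u - h *\<^sub>R u 0)) {0..h}"
      by (rule has_integral_diff[OF int c])
    have bnd: "norm (integral {0..h} u - h *\<^sub>R u 0) \<le> e / 2 * h"
    proof (rule int_norm_le[OF diff])
      fix s assume s: "s \<in> {0..h}"
      then have "dist s 0 < \<delta>" using h by simp
      then have "dist (u s) (u 0) < e / 2" using d s by simp
      then show "norm (u s - u 0) \<le> e / 2" by (simp add: dist_norm)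
    qed (use h e in auto)
    have "(1/h) *\<^sub>R integral {0..h} u - u 0 = (1/h) *\<^sub>R (integral {0..h} u - h *\<^sub>R u 0)"
      using h by (simp add: scaleR_diff_right)
    then have "dist ((1/h) *\<^sub>R integral {0..h} u) (u 0) = (1/h) * norm (integral {0..h} u - h *\<^sub>R u 0)"
      using h by (simp add: dist_norm)
    also have "\<dots> \<le> (1/h) * (e / 2 * h)" using bnd h by (intro mult_left_mono) auto
    also have "\<dots> = e / 2" using h by simp
    also have "\<dots> < e" using e by simp
    finally show "dist ((1/h) *\<^sub>R integral {0..h} u) (u 0) < e" .
  qed
qed

context setting
begin

lemma S_cont_int: "continuous_on {0..t} (\<lambda>s. S s g)"
  by (rule continuous_on_subset[OF S_strong]) auto

lemma S_integrable: "(\<lambda>s. S s g) integrable_on {0..t}"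
  by (rule integrable_continuous_real[OF S_cont_int])

lemma S_int_bound: "0 \<le> t \<Longrightarrow> norm (integral {0..t} (\<lambda>s. S s g)) \<le> norm g * t"
  by (rule int_norm_le[OF integrable_integral[OF S_integrable]]) (auto simp: S_contr)

lemma S_int_diff: "integral {0..t} (\<lambda>s. S s g1) - integral {0..t} (\<lambda>s. S s g2) = integral {0..t} (\<lambda>s. S s (g1 - g2))"
proof -
  have "integral {0..t} (\<lambda>s. S s g1) - integral {0..t} (\<lambda>s. S s g2) = integral {0..t} (\<lambda>s. S s g1 - S s g2)"
    by (rule integral_diff[OF S_integrable S_integrable, symmetric])
  also have "\<dots> = integral {0..t} (\<lambda>s. S s (g1 - g2))"
    by (rule integral_cong) (simp add: S_diff)
  finally show ?thesis .
qed

lemma A_scale: "f \<in> \<F> \<Longrightarrow> A (c *\<^sub>R f) = c *\<^sub>R A f"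
proof -
  assume "f \<in> \<F>"
  then obtain m where f: "f \<in> \<F>m m" using F_Fm by blast
  obtain P Ah Bn N where d: "mdata m P Ah Bn N" using mdata_ex by blast
  have "c *\<^sub>R f \<in> \<F>m m" using f by (rule subspace_scale[OF Fm_sub])
  then show ?thesis using d f unfolding mdata_def by (simp add: ap_scale2)
qed

lemma A_F: "f \<in> \<F> \<Longrightarrow> A f \<in> \<F>"
  using F_Fm A_Fm Fm_F by blast

lemma ftc: "x \<in> \<F> \<Longrightarrow> 0 \<le> t \<Longrightarrow> ((\<lambda>s. S s (A x)) has_integral (S t x - x)) {0..t}"
proof -
  assume x: "x \<in> \<F>" and t: "0 \<le> t"
  have "((\<lambda>s. S0 s (A x)) has_integral (S0 t x - S0 0 x)) {0..t}"
    by (rule fundamental_theorem_of_calculus[OF t]) (rule S0_deriv[OF x])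
  then have h: "((\<lambda>s. S0 s (A x)) has_integral (S t x - x)) {0..t}"
    using S0_zero_time[OF x] S_agree[OF t x] by simp
  have eqf: "\<And>s. s \<in> {0..t} \<Longrightarrow> S0 s (A x) = S s (A x)"
    using S_agree A_F[OF x] by simp
  show ?thesis using iffD1[OF has_integral_cong[OF eqf] h] .
qed

lemma Yint: "x \<in> \<F> \<Longrightarrow> 0 \<le> t \<Longrightarrow> integral {0..t} (\<lambda>s. S s x) \<in> \<F> \<and> A (integral {0..t} (\<lambda>s. S s x)) = S t x - x"
proof -
  assume "x \<in> \<F>" and t: "0 \<le> t"
  then obtain m where x: "x \<in> \<F>m m" using F_Fm by blast
  have xF: "x \<in> \<F>" using Fm_F[OF x] .
  obtain P Ah Bn N where d: "mdata m P Ah Bn N" using mdata_ex by blast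
  have Pbl: "bounded_linear P" and PF: "\<forall>f. P f \<in> \<F>m m" and Pid: "\<forall>f\<in>\<F>m m. P f = f"
    and Aeq: "\<forall>f\<in>\<F>m m. A f = ap Ah f" using d unfolding mdata_def by auto
  define I where "I = integral {0..t} (\<lambda>s. S0 s x)"
  have IS: "integral {0..t} (\<lambda>s. S s x) = I" unfolding I_def
    by (rule integral_cong) (simp add: S_agree xF)
  have intg: "(\<lambda>s. S0 s x) integrable_on {0..t}"
    by (rule integrable_continuous_real, rule continuous_on_subset[OF S0_cont[OF xF]]) auto
  have "P I = integral {0..t} (P \<circ> (\<lambda>s. S0 s x))" unfolding I_def
    by (rule integral_linear[OF intg Pbl, symmetric])
  also have "\<dots> = I" unfolding I_def by (rule integral_cong) (simp add: Pid S0_Fm[OF x])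
  finally have PI: "P I = I" .
  have IF: "I \<in> \<F>m m" using PF[rule_format, of I] unfolding PI .
  have "A I = ap Ah I" using Aeq IF by simp
  also have "\<dots> = integral {0..t} (ap Ah \<circ> (\<lambda>s. S0 s x))" unfolding I_def
    by (rule integral_linear[OF intg bounded_linear_ap, symmetric])
  also have "\<dots> = integral {0..t} (\<lambda>s. S s (A x))"
  proof (rule integral_cong)
    fix s assume s: "s \<in> {0..t}"
    have "(ap Ah \<circ> (\<lambda>s. S0 s x)) s = A (S0 s x)" using Aeq S0_Fm[OF x] by simp
    also have "\<dots> = S0 s (A x)" by (rule S0_comm[OF xF])
    also have "\<dots> = S s (A x)" using S_agree[of s "A x"] s A_F[OF xF] by simp
    finally show "(ap Ah \<circ> (\<lambda>s. S0 s x)) s = S s (A x)" .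
  qed
  also have "\<dots> = S t x - x" by (rule integral_unique[OF ftc[OF xF t]])
  finally show ?thesis using IS Fm_F[OF IF] by simp
qed

definition Gr where "Gr = {(f, A f) | f. f \<in> \<F>}"

lemma closure_sub_gen: "closure Gr \<subseteq> generator_graph S"
proof
  fix z assume "z \<in> closure Gr"
  then obtain zs where zs: "\<And>j. zs j \<in> Gr" "zs \<longlonglongrightarrow> z" unfolding closure_sequential by blast
  obtain f g where z: "z = (f, g)" by (cases z)
  define x where "x = (\<lambda>j. fst (zs j))"
  have xF: "x j \<in> \<F>" and zsx: "zs j = (x j, A (x j))" for j
    using zs(1)[of j] unfolding Gr_def x_def by auto
  have xl: "x \<longlonglongrightarrow> f" unfolding x_def using tendsto_fst[OF zs(2)] z by simp
  have Axl: "(\<lambda>j. A (x j)) \<longlonglongrightarrow> g"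
    using tendsto_snd[OF zs(2)] z zsx by (simp add: comp_def)
  have I: "S t f - f = integral {0..t} (\<lambda>s. S s g)" if t: "0 \<le> t" for t
  proof -
    have e: "S t (x j) - x j = integral {0..t} (\<lambda>s. S s (A (x j)))" for j
      by (rule integral_unique[OF ftc[OF xF t], symmetric])
    have "isCont (S t) f" using S_cont[OF t] continuous_on_eq_continuous_at[of UNIV] by auto
    then have l1: "(\<lambda>j. S t (x j) - x j) \<longlonglongrightarrow> S t f - f"
      by (intro tendsto_diff isCont_tendsto_compose[OF _ xl] xl)
    have l2: "(\<lambda>j. integral {0..t} (\<lambda>s. S s (A (x j)))) \<longlonglongrightarrow> integral {0..t} (\<lambda>s. S s g)"
    proof (rule LIM_zero_cancel, rule Lim_null_comparison)
      show "\<forall>\<^sub>F j in sequentially. norm (integral {0..t} (\<lambda>s. S s (A (x j))) - integral {0..t} (\<lambda>s. S s g)) \<le> norm (A (x j) - g) * t"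
        by (rule always_eventually, intro allI) (simp add: S_int_diff S_int_bound t)
      have "(\<lambda>j. norm (A (x j) - g)) \<longlonglongrightarrow> 0" using Axl by (intro tendsto_norm_zero LIM_zero)
      then show "(\<lambda>j. norm (A (x j) - g) * t) \<longlonglongrightarrow> 0" by (rule tendsto_mult_left_zero)
    qed
    show ?thesis using l1 l2 e LIMSEQ_unique by simp
  qed
  have "((\<lambda>h. (1/h) *\<^sub>R integral {0..h} (\<lambda>s. S s g)) \<longlongrightarrow> S 0 g) (at_right 0)"
    by (rule avg_lim[OF S_strong])
  then have "((\<lambda>h. (1/h) *\<^sub>R integral {0..h} (\<lambda>s. S s g)) \<longlongrightarrow> g) (at_right 0)"
    by (simp add: S_zero)
  moreover have "\<forall>\<^sub>F h in at_right 0. (1/h) *\<^sub>R integral {0..h} (\<lambda>s. S s g) = (1/h) *\<^sub>R (S h f - f)"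
    using eventually_at_right_less[of "0::real"] by (rule eventually_mono) (simp add: I)
  ultimately have "((\<lambda>h. (1/h) *\<^sub>R (S h f - f)) \<longlongrightarrow> g) (at_right 0)"
    by (rule Lim_transform_eventually)
  then show "z \<in> generator_graph S" unfolding generator_graph_def z by simp
qed

lemma gen_sub_closure: "generator_graph S \<subseteq> closure Gr"
proof
  fix z assume "z \<in> generator_graph S"
  then obtain f g where z: "z = (f, g)" and lim: "((\<lambda>h. (1/h) *\<^sub>R (S h f - f)) \<longlongrightarrow> g) (at_right 0)"
    unfolding generator_graph_def by auto
  have C: "((1/t) *\<^sub>R integral {0..t} (\<lambda>s. S s f), (1/t) *\<^sub>R (S t f - f)) \<in> closure Gr" if t: "0 < t" for t
  proof -
    have "f \<in> closure \<F>" using A3_F(2) by simp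
    then obtain x where x: "\<And>j. x j \<in> \<F>" "x \<longlonglongrightarrow> f" unfolding closure_sequential by blast
    define y where "y = (\<lambda>j. (1/t) *\<^sub>R integral {0..t} (\<lambda>s. S s (x j)))"
    have yG: "(y j, (1/t) *\<^sub>R (S t (x j) - x j)) \<in> Gr" for j
    proof -
      have Y: "integral {0..t} (\<lambda>s. S s (x j)) \<in> \<F>" "A (integral {0..t} (\<lambda>s. S s (x j))) = S t (x j) - x j"
        using Yint[OF x(1)[of j]] t by auto
      have "y j \<in> \<F>" unfolding y_def using Y(1) by (rule subspace_scale[OF A3_F(1)])
      moreover have "A (y j) = (1/t) *\<^sub>R (S t (x j) - x j)" unfolding y_def using A_scale[OF Y(1)] Y(2) by simp
      ultimately show ?thesis unfolding Gr_def by auto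
    qed
    have l1: "y \<longlonglongrightarrow> (1/t) *\<^sub>R integral {0..t} (\<lambda>s. S s f)"
    proof (rule LIM_zero_cancel, rule Lim_null_comparison)
      show "\<forall>\<^sub>F j in sequentially. norm (y j - (1/t) *\<^sub>R integral {0..t} (\<lambda>s. S s f)) \<le> (1/t) * (norm (x j - f) * t)"
      proof (rule always_eventually, intro allI)
        fix j
        have "y j - (1/t) *\<^sub>R integral {0..t} (\<lambda>s. S s f) = (1/t) *\<^sub>R integral {0..t} (\<lambda>s. S s (x j - f))"
          unfolding y_def by (simp add: scaleR_diff_right[symmetric] S_int_diff)
        then show "norm (y j - (1/t) *\<^sub>R integral {0..t} (\<lambda>s. S s f)) \<le> (1/t) * (norm (x j - f) * t)"
          using S_int_bound[of t "x j - f"] t by (simp add: pos_divide_le_eq)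
      qed
      have "(\<lambda>j. norm (x j - f)) \<longlonglongrightarrow> 0" using x(2) by (intro tendsto_norm_zero LIM_zero)
      then show "(\<lambda>j. (1/t) * (norm (x j - f) * t)) \<longlonglongrightarrow> 0"
        by (intro tendsto_mult_right_zero tendsto_mult_left_zero)
    qed
    have "isCont (S t) f" using S_cont[of t] t continuous_on_eq_continuous_at[of UNIV] by auto
    then have l2: "(\<lambda>j. (1/t) *\<^sub>R (S t (x j) - x j)) \<longlonglongrightarrow> (1/t) *\<^sub>R (S t f - f)"
      by (intro tendsto_scaleR tendsto_const tendsto_diff isCont_tendsto_compose[OF _ x(2)] x(2))
    have "(\<lambda>j. (y j, (1/t) *\<^sub>R (S t (x j) - x j))) \<longlonglongrightarrow> ((1/t) *\<^sub>R integral {0..t} (\<lambda>s. S s f), (1/t) *\<^sub>R (S t f - f))"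
      by (rule tendsto_Pair[OF l1 l2])
    then show ?thesis unfolding closure_sequential
      by (intro exI[of _ "\<lambda>j. (y j, (1/t) *\<^sub>R (S t (x j) - x j))"] conjI allI yG)
  qed
  have "((\<lambda>t. ((1/t) *\<^sub>R integral {0..t} (\<lambda>s. S s f), (1/t) *\<^sub>R (S t f - f))) \<longlongrightarrow> (S 0 f, g)) (at_right 0)"
    by (rule tendsto_Pair[OF avg_lim[OF S_strong] lim])
  then have "(S 0 f, g) \<in> closure Gr"
  proof (rule Lim_in_closed_set[OF closed_closure _ trivial_limit_at_right_real, rotated])
    show "\<forall>\<^sub>F t in at_right 0. ((1/t) *\<^sub>R integral {0..t} (\<lambda>s. S s f), (1/t) *\<^sub>R (S t f - f)) \<in> closure Gr"
      using eventually_at_right_less[of "0::real"] by (rule eventually_mono) (rule C)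
  qed
  then show "z \<in> closure Gr" unfolding z S_zero .
qed

lemma gen_eq: "generator_graph S = closure Gr"
  by (rule equalityI[OF gen_sub_closure closure_sub_gen])

lemma closable_A: "closable \<F> A"
  unfolding closable_def
proof (intro allI impI)
  fix f g1 g2
  assume h1: "(f, g1) \<in> closure {(x, A x) |x. x \<in> \<F>}" and h2: "(f, g2) \<in> closure {(x, A x) |x. x \<in> \<F>}"
  have e: "{(x, A x) |x. x \<in> \<F>} = Gr" unfolding Gr_def by (rule refl)
  have m1: "(f, g1) \<in> generator_graph S" unfolding gen_eq using h1 unfolding e .
  have m2: "(f, g2) \<in> generator_graph S" unfolding gen_eq using h2 unfolding e .
  have l1: "((\<lambda>h. (1/h) *\<^sub>R (S h f - f)) \<longlongrightarrow> g1) (at_right 0)"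
    using m1 unfolding generator_graph_def by (simp only: mem_Collect_eq prod.case)
  have l2: "((\<lambda>h. (1/h) *\<^sub>R (S h f - f)) \<longlongrightarrow> g2) (at_right 0)"
    using m2 unfolding generator_graph_def by (simp only: mem_Collect_eq prod.case)
  show "g1 = g2" by (rule tendsto_unique[OF trivial_limit_at_right_real l1 l2])
qed

lemma conv3:
  assumes e: "e > 0"
  shows "\<exists>N. \<forall>n\<ge>N. \<forall>t\<in>{0..R}. \<forall>la\<in>L n.
           \<bar>(T n ^^ nat \<lfloor>t / \<epsilon> n\<rfloor>) (pr n f) la - pr n (S t f) la\<bar> < e"
proof -
  have e3: "e / 3 > 0" using e by simp
  have "f \<in> closure \<F>" using A3_F(2) by simp
  then have "\<forall>\<epsilon>>0. \<exists>y\<in>\<F>. dist y f < \<epsilon>" unfolding closure_approachable .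
  then obtain u where u: "u \<in> \<F>" "dist u f < e / 3" using e3 by blast
  obtain m where um: "u \<in> \<F>m m" using F_Fm[OF u(1)] by blast
  obtain N where N: "\<forall>n\<ge>N. \<forall>t\<in>{0..R}. \<forall>la\<in>L n.
           \<bar>(T n ^^ nat \<lfloor>t / \<epsilon> n\<rfloor>) (pr n u) la - pr n (S0 t u) la\<bar> < e / 3"
    using approx_F[OF um e3] by blast
  have "\<forall>n\<ge>N. \<forall>t\<in>{0..R}. \<forall>la\<in>L n.
           \<bar>(T n ^^ nat \<lfloor>t / \<epsilon> n\<rfloor>) (pr n f) la - pr n (S t f) la\<bar> < e"
  proof (intro allI impI ballI)
    fix n t la assume n: "N \<le> n" and t: "t \<in> {0..R}" and la: "la \<in> L n"
    define k where "k = nat \<lfloor>t / \<epsilon> n\<rfloor>"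
    have t0: "0 \<le> t" using t by simp
    have a: "\<bar>(T n ^^ k) (pr n f) la - (T n ^^ k) (pr n u) la\<bar> \<le> norm (f - u)"
    proof -
      have "(T n ^^ k) (pr n f) la - (T n ^^ k) (pr n u) la = (T n ^^ k) (pr n (f - u)) la"
        by (simp add: pr_diff Tk_diff)
      moreover have "\<forall>la\<in>L n. \<bar>pr n (f - u) la\<bar> \<le> norm (f - u)" using pr_bound by blast
      ultimately show ?thesis using Tk_bound[of n "pr n (f - u)" "norm (f - u)" k] la by simp
    qed
    have b: "\<bar>(T n ^^ k) (pr n u) la - pr n (S t u) la\<bar> < e / 3"
      using N n t la S_agree[OF t0 u(1)] unfolding k_def by simp
    have c: "\<bar>pr n (S t u) la - pr n (S t f) la\<bar> \<le> norm (u - f)"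
    proof -
      have "pr n (S t u) la - pr n (S t f) la = pr n (S t (u - f)) la" by (simp add: pr_diff S_diff[OF t0])
      also have "\<bar>\<dots>\<bar> \<le> norm (S t (u - f))" by (rule pr_bound)
      also have "\<dots> \<le> norm (u - f)" by (rule S_contr[OF t0])
      finally show ?thesis .
    qed
    have "norm (f - u) < e / 3" "norm (u - f) < e / 3" using u(2) by (auto simp: dist_norm norm_minus_commute)
    with a b c show "\<bar>(T n ^^ nat \<lfloor>t / \<epsilon> n\<rfloor>) (pr n f) la - pr n (S t f) la\<bar> < e"
      unfolding k_def[symmetric] by linarith
  qed
  then show ?thesis by blast
qed

lemma cms: "conservative_markov_semigroup S"
  unfolding conservative_markov_semigroup_def
proof (intro conjI)
  show "\<forall>t\<ge>0. bounded_linear (S t)" using S_bl by blast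
  show "\<forall>f. S 0 f = f" using S_zero by blast
  show "\<forall>s\<ge>0. \<forall>t\<ge>0. \<forall>f. S (s + t) f = S s (S t f)" using S_semi by blast
  show "\<forall>f. continuous_on {0..} (\<lambda>t. S t f)" using S_strong by blast
  show "\<forall>t\<ge>0. \<forall>f. norm (S t f) \<le> norm f" using S_contr by blast
  show "\<forall>t\<ge>0. \<forall>f. (\<forall>x. 0 \<le> apply_bcontfun f x) \<longrightarrow> (\<forall>x. 0 \<le> apply_bcontfun (S t f) x)"
    using S_pos by blast
  show "\<forall>t\<ge>0. S t (const_bcontfun 1) = const_bcontfun 1" using S_one by blast
qed

end


theorem proposition1p4:
  fixes lev :: "'l \<Rightarrow> nat"
    and pd :: "'l \<Rightarrow> 'l \<Rightarrow> real"
    and M :: "'l \<Rightarrow> real"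
    and \<iota> :: "nat \<Rightarrow> 'l \<Rightarrow> 'b::topological_space"
    and \<F> :: "('b \<Rightarrow>\<^sub>C real) set"
    and \<F>m :: "nat \<Rightarrow> ('b \<Rightarrow>\<^sub>C real) set"
    and \<epsilon> :: "nat \<Rightarrow> real"
    and A :: "('b \<Rightarrow>\<^sub>C real) \<Rightarrow> ('b \<Rightarrow>\<^sub>C real)"
  assumes kernel: "graded_down_kernel lev pd"
    and coh: "coherent_system lev pd M"
    and Mpos: "\<And>la. M la > 0"
    and inj: "\<And>n. inj_on (\<iota> n) (level_set lev n)"
    and A1: "compact (UNIV :: 'b set)" "metrizable_space (euclidean :: 'b topology)"
            "separable_space (euclidean :: 'b topology)"
    and A2: "\<And>U. open U \<Longrightarrow> U \<noteq> {} \<Longrightarrow>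
               \<exists>N. \<forall>n\<ge>N. U \<inter> \<iota> n ` level_set lev n \<noteq> {}"
    and A3_F: "subspace \<F>" "closure \<F> = UNIV"
    and A3_Fm: "\<And>m. subspace (\<F>m m)" "\<And>m. \<exists>B. finite B \<and> \<F>m m = span B"
               "\<And>m. \<F>m m \<subseteq> \<F>m (Suc m)" "(\<Union>m. \<F>m m) = \<F>"
    and A3_inv: "\<And>m. \<exists>N. \<forall>n\<ge>N. inj_on (proj lev \<iota> n) (\<F>m m) \<and>
                    T_op lev pd M n ` proj lev \<iota> n ` \<F>m m \<subseteq> proj lev \<iota> n ` \<F>m m"
    and A4_eps: "\<And>n. \<epsilon> n > 0" "\<epsilon> \<longlonglongrightarrow> 0"
    and A4: "\<And>m f. f \<in> \<F>m m \<Longrightarrow>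
               \<exists>g. (\<forall>\<^sub>F n in sequentially. g n \<in> \<F>m m \<and>
                      proj lev \<iota> n (g n) =
                        (\<lambda>la. (T_op lev pd M n (proj lev \<iota> n f) la - proj lev \<iota> n f la) / \<epsilon> n))
                    \<and> g \<longlonglongrightarrow> A f"
    and A5: "const_bcontfun 1 \<in> \<F>"
  shows "closable \<F> A \<and>
    (\<exists>S. conservative_markov_semigroup S \<and>
         generator_graph S = closure {(f, A f) | f. f \<in> \<F>} \<and>
         (\<forall>f R e. e > 0 \<longrightarrow>
            (\<exists>N. \<forall>n\<ge>N. \<forall>t\<in>{0..R}. \<forall>la\<in>level_set lev n.
               \<bar>(T_op lev pd M n ^^ nat \<lfloor>t / \<epsilon> n\<rfloor>) (proj lev \<iota> n f) la
                 - proj lev \<iota> n (S t f) la\<bar> < e)))"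
proof -
  have inj: "\<exists>N. \<forall>n\<ge>N. inj_on (proj lev \<iota> n) (\<F>m m)" for m
  proof -
    obtain N where "\<forall>n\<ge>N. inj_on (proj lev \<iota> n) (\<F>m m) \<and>
                    T_op lev pd M n ` proj lev \<iota> n ` \<F>m m \<subseteq> proj lev \<iota> n ` \<F>m m"
      using A3_inv[of m] by (elim exE)
    then show ?thesis by (intro exI[of _ N]) simp
  qed
  interpret setting lev pd M \<iota> \<F> \<F>m \<epsilon> A
    by (rule setting.intro[OF kernel coh Mpos A2 A3_F A3_Fm inj A4_eps A4 A5])
  have g: "generator_graph S = closure {(f, A f) | f. f \<in> \<F>}"
    using gen_eq unfolding Gr_def .
  have c: "\<forall>f R e. e > 0 \<longrightarrow>
            (\<exists>N. \<forall>n\<ge>N. \<forall>t\<in>{0..R}. \<forall>la\<in>level_set lev n.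
               \<bar>(T_op lev pd M n ^^ nat \<lfloor>t / \<epsilon> n\<rfloor>) (proj lev \<iota> n f) la
                 - proj lev \<iota> n (S t f) la\<bar> < e)"
    using conv3 by blast
  show ?thesis
    by (intro conjI closable_A exI[of _ S] cms g c)
qed


end
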